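(* In the setting of the context, suppose $0<p_{A|X}(x)<1$ and $0<\hat p_{A|X}(x)<1$ for all $x\in\mathcal X$, where $\hat p_{A|X}$ is a fixed function (deterministic, or independent of the data). Let $\tilde C^{\mathrm{pro}}$ be the procedure $\hat C^{\mathrm{pro}}$ of the context, but with the bins $D_k$ (and hence $B_{1:n}$) constructed from $\hat p_{A|X}$ instead of $p_{A|X}$, i.e. $D_k=\{x:\hat p_{A|X}(x)\in[z_k,z_{k+1})\}$. Define $f_{p,\hat p}(x)=\dfrac{p_{A|X}(x)/(1-p_{A|X}(x))}{\hat p_{A|X}(x)/(1-\hat p_{A|X}(x))}$ and $\delta_{\hat p}=e^{2\sup_{x\in\mathcal X}|\log f_{p,\hat p}(x)|}-1$. Then $$\mathbb E\Big[\frac{1}{N^{(0)}}\sum_{i\in I_{A=0}}\mathbf 1\{Y_i\in\tilde C^{\mathrm{pro}}(X_i)\}\ \Big|\ B_{1:n},A_{1:n}\Big]\ge1-\alpha-(\varepsilon+\delta_{\hat p}+\varepsilon\,\delta_{\hat p}).$$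
   Context: Missing-at-random setting: $(X_i,Y_i,A_i)_{1\le i\le n}$ i.i.d. with $X\sim P_X$, $Y\mid X\sim P_{Y|X}$, $A\mid X\sim\mathrm{Bernoulli}(p_{A|X}(X))$, $A\perp Y\mid X$; observed data $(X_i,A_i,Y_iA_i)$; $p_{A|X}(x)=\mathbb P(A=1|X=x)$. $I_{A=0}=\{i:A_i=0\}$, $N^{(0)}=|I_{A=0}|$. $s$ is a fixed measurable score, $S_i=s(X_i,Y_i)$. For $\varepsilon>0$, $z_k=(1+\varepsilon)^k/(1+(1+\varepsilon)^k)$, $k\in\mathbb Z$; $B_i$ = the $k$ with $X_i\in D_k$. With $B'_1,\dots,B'_M$ the distinct values of the $B_i$, $I_k^{\mathcal B}=\{i:B_i=B'_k\}$, $I_k^{\mathcal B,0},I_k^{\mathcal B,1}$ its subsets with $A_i=0$, $A_i=1$, $N_k^{\mathcal B}=|I_k^{\mathcal B}|$, $N_k^{\mathcal B,0}=|I_k^{\mathcal B,0}|$. $\hat C^{\mathrm{pro}}(x)=\{y:s(x,y)\le Q_{1-\alpha}(\sum_k\sum_{i\in I_k^{\mathcal B,1}}\frac{N_k^{\mathcal B,0}}{N^{(0)}N_k^{\mathcal B}}\delta_{S_i}+\frac1{N^{(0)}}\sum_k\frac{(N_k^{\mathcal B,0})^2}{N_k^{\mathcal B}}\delta_{+\infty})\}$ ($=\mathcal Y$ if $N^{(0)}=0$), $Q_{1-\alpha}(P)=\inf\{t:\mathbb P_{T\sim P}(T\le t)\ge1-\alpha\}$. Coverage proportion is $1$ when $N^{(0)}=0$.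 *)

theory Defs
  imports "HOL-Probability.Probability"
begin

text \<open>One observation is ((X,Y),A). (X,Y) has joint law Q; given (X,Y), A is
Bernoulli(p(X)). This encodes A independent of Y given X and P(A=1|X)=p(X).\<close>

definition mar_obs :: "('x \<times> 'y) measure \<Rightarrow> ('x \<Rightarrow> real) \<Rightarrow> (('x \<times> 'y) \<times> bool) measure" where
  "mar_obs Q p = density (Q \<Otimes>\<^sub>M count_space UNIV)
      (\<lambda>((x,y),a). ennreal (if a then p x else 1 - p x))"

definition mar_data :: "nat \<Rightarrow> ('x \<times> 'y) measure \<Rightarrow> ('x \<Rightarrow> real) \<Rightarrow> (nat \<Rightarrow> ('x \<times> 'y) \<times> bool) measure" where
  "mar_data n Q p = PiM {..<n} (\<lambda>_. mar_obs Q p)"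

definition obsX :: "(nat \<Rightarrow> ('x \<times> 'y) \<times> bool) \<Rightarrow> nat \<Rightarrow> 'x" where
  "obsX \<omega> i = fst (fst (\<omega> i))"
definition obsY :: "(nat \<Rightarrow> ('x \<times> 'y) \<times> bool) \<Rightarrow> nat \<Rightarrow> 'y" where
  "obsY \<omega> i = snd (fst (\<omega> i))"
definition obsA :: "(nat \<Rightarrow> ('x \<times> 'y) \<times> bool) \<Rightarrow> nat \<Rightarrow> bool" where
  "obsA \<omega> i = snd (\<omega> i)"

definition zk :: "real \<Rightarrow> int \<Rightarrow> real" where
  "zk \<epsilon> k = (1 + \<epsilon>) powi k / (1 + (1 + \<epsilon>) powi k)"

definition bin :: "real \<Rightarrow> ('x \<Rightarrow> real) \<Rightarrow> 'x \<Rightarrow> int" where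
  "bin \<epsilon> ph x = (THE k. zk \<epsilon> k \<le> ph x \<and> ph x < zk \<epsilon> (k + 1))"

definition N0 :: "nat \<Rightarrow> (nat \<Rightarrow> bool) \<Rightarrow> nat" where
  "N0 n a = card {i \<in> {..<n}. \<not> a i}"

definition Nk :: "nat \<Rightarrow> (nat \<Rightarrow> int) \<Rightarrow> int \<Rightarrow> nat" where
  "Nk n b k = card {j \<in> {..<n}. b j = k}"

definition Nk0 :: "nat \<Rightarrow> (nat \<Rightarrow> int) \<Rightarrow> (nat \<Rightarrow> bool) \<Rightarrow> int \<Rightarrow> nat" where
  "Nk0 n b a k = card {j \<in> {..<n}. b j = k \<and> \<not> a j}"

text \<open>Quantile Q_beta of the finite discrete measure sum_{i in I} w_i delta_{v_i}
  (values in the extended reals, so that +infinity atoms are allowed):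
  inf { t. P(T <= t) >= beta }.\<close>
definition wquantile :: "real \<Rightarrow> ('i \<Rightarrow> real) \<Rightarrow> ('i \<Rightarrow> ereal) \<Rightarrow> 'i set \<Rightarrow> ereal" where
  "wquantile \<beta> w v I = Inf {t :: ereal. \<beta> \<le> (\<Sum>i\<in>{i \<in> I. v i \<le> t}. w i)}"

text \<open>Atoms 0..n-1 are the scores S_i (with weight N_k^{B,0}/(N^0 N_k^B) if A_i=1,
  weight 0 if A_i = 0); atom n is +infinity with weight
  (1/N^0) sum_k (N_k^{B,0})^2 / N_k^B.\<close>
definition pro_weight :: "nat \<Rightarrow> (nat \<Rightarrow> int) \<Rightarrow> (nat \<Rightarrow> bool) \<Rightarrow> nat \<Rightarrow> real" where
  "pro_weight n b a i =
     (if i < n then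
        (if a i then real (Nk0 n b a (b i)) / (real (N0 n a) * real (Nk n b (b i))) else 0)
      else (\<Sum>k\<in>b ` {..<n}. real (Nk0 n b a k) ^ 2 / real (Nk n b k)) / real (N0 n a))"

definition pro_value :: "nat \<Rightarrow> (nat \<Rightarrow> real) \<Rightarrow> nat \<Rightarrow> ereal" where
  "pro_value n S i = (if i < n then ereal (S i) else \<infinity>)"

definition pro_threshold :: "real \<Rightarrow> nat \<Rightarrow> (nat \<Rightarrow> int) \<Rightarrow> (nat \<Rightarrow> bool) \<Rightarrow> (nat \<Rightarrow> real) \<Rightarrow> ereal" where
  "pro_threshold \<alpha> n b a S = wquantile (1 - \<alpha>) (pro_weight n b a) (pro_value n S) {..n}"

definition pro_set :: "real \<Rightarrow> real \<Rightarrow> ('x \<Rightarrow> real) \<Rightarrow> ('x \<Rightarrow> 'y \<Rightarrow> real) \<Rightarrow> nat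
    \<Rightarrow> (nat \<Rightarrow> ('x \<times> 'y) \<times> bool) \<Rightarrow> 'x \<Rightarrow> 'y set" where
  "pro_set \<alpha> \<epsilon> ph s n \<omega> x =
     (let b = (\<lambda>i. bin \<epsilon> ph (obsX \<omega> i)); a = obsA \<omega>; S = (\<lambda>i. s (obsX \<omega> i) (obsY \<omega> i))
      in if N0 n a = 0 then UNIV else {y. ereal (s x y) \<le> pro_threshold \<alpha> n b a S})"

definition pro_coverage :: "real \<Rightarrow> real \<Rightarrow> ('x \<Rightarrow> real) \<Rightarrow> ('x \<Rightarrow> 'y \<Rightarrow> real) \<Rightarrow> nat
    \<Rightarrow> (nat \<Rightarrow> ('x \<times> 'y) \<times> bool) \<Rightarrow> real" where
  "pro_coverage \<alpha> \<epsilon> ph s n \<omega> =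
     (if N0 n (obsA \<omega>) = 0 then 1
      else (\<Sum>i\<in>{i \<in> {..<n}. \<not> obsA \<omega> i}.
              (if obsY \<omega> i \<in> pro_set \<alpha> \<epsilon> ph s n \<omega> (obsX \<omega> i) then 1 else 0))
           / real (N0 n (obsA \<omega>)))"

definition BA_algebra :: "real \<Rightarrow> ('x \<Rightarrow> real) \<Rightarrow> nat \<Rightarrow> (nat \<Rightarrow> ('x \<times> 'y) \<times> bool) measure
    \<Rightarrow> (nat \<Rightarrow> ('x \<times> 'y) \<times> bool) measure" where
  "BA_algebra \<epsilon> ph n \<Omega> = vimage_algebra (space \<Omega>)
      (\<lambda>\<omega>. restrict (\<lambda>i. (bin \<epsilon> ph (obsX \<omega> i), obsA \<omega> i)) {..<n}) (count_space UNIV)"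

definition odds_ratio :: "('x \<Rightarrow> real) \<Rightarrow> ('x \<Rightarrow> real) \<Rightarrow> 'x \<Rightarrow> real" where
  "odds_ratio p ph x = (p x / (1 - p x)) / (ph x / (1 - ph x))"

end

theory Submission
  imports Defs
begin


lemma wq_char:
  fixes w :: "'i \<Rightarrow> real" and v :: "'i \<Rightarrow> ereal"
  assumes fin: "finite I" and w: "\<And>i. i\<in>I \<Longrightarrow> 0 \<le> w i" and b: "0 < \<beta>"
  shows "x \<le> wquantile \<beta> w v I \<longleftrightarrow> (\<Sum>i\<in>{i\<in>I. v i < x}. w i) < \<beta>"
proof
  assume xq: "x \<le> wquantile \<beta> w v I"
  show "(\<Sum>i\<in>{i\<in>I. v i < x}. w i) < \<beta>"
  proof (rule ccontr)
    assume "\<not> ?thesis"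
    hence ge: "\<beta> \<le> (\<Sum>i\<in>{i\<in>I. v i < x}. w i)" by simp
    let ?V = "v ` {i\<in>I. v i < x}"
    have ne: "{i\<in>I. v i < x} \<noteq> {}"
    proof
      assume "{i\<in>I. v i < x} = {}" with ge b show False by simp
    qed
    have finV: "finite ?V" using fin by auto
    define t where "t = Max ?V"
    have tV: "t \<in> ?V" using ne finV unfolding t_def by (intro Max_in) auto
    hence tx: "t < x" by auto
    have eq: "{i\<in>I. v i \<le> t} = {i\<in>I. v i < x}"
    proof (intro set_eqI iffI)
      fix i assume "i \<in> {i\<in>I. v i \<le> t}" thus "i \<in> {i\<in>I. v i < x}" using tx by auto
    next
      fix i assume "i \<in> {i\<in>I. v i < x}"
      hence "v i \<le> t" unfolding t_def using finV by (intro Max_ge) auto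
      thus "i \<in> {i\<in>I. v i \<le> t}" using \<open>i \<in> {i\<in>I. v i < x}\<close> by auto
    qed
    have "wquantile \<beta> w v I \<le> t"
      unfolding wquantile_def by (rule Inf_lower) (use ge eq in simp)
    with xq tx show False by simp
  qed
next
  assume lt: "(\<Sum>i\<in>{i\<in>I. v i < x}. w i) < \<beta>"
  show "x \<le> wquantile \<beta> w v I"
    unfolding wquantile_def
  proof (rule Inf_greatest)
    fix t assume "t \<in> {t. \<beta> \<le> (\<Sum>i\<in>{i\<in>I. v i \<le> t}. w i)}"
    hence tb: "\<beta> \<le> (\<Sum>i\<in>{i\<in>I. v i \<le> t}. w i)" by simp
    show "x \<le> t"
    proof (rule ccontr)
      assume "\<not> x \<le> t"
      hence "t < x" by simp
      hence "{i\<in>I. v i \<le> t} \<subseteq> {i\<in>I. v i < x}" by auto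
      hence "(\<Sum>i\<in>{i\<in>I. v i \<le> t}. w i) \<le> (\<Sum>i\<in>{i\<in>I. v i < x}. w i)"
        using fin w by (intro sum_mono2) auto
      with tb lt show False by simp
    qed
  qed
qed


definition cw :: "nat \<Rightarrow> (nat \<Rightarrow> int) \<Rightarrow> (nat \<Rightarrow> bool) \<Rightarrow> int \<Rightarrow> real" where
  "cw n b a k = real (Nk0 n b a k) / (real (N0 n a) * real (Nk n b k))"

definition covF :: "real \<Rightarrow> nat \<Rightarrow> (nat \<Rightarrow> int) \<Rightarrow> (nat \<Rightarrow> bool) \<Rightarrow> (nat \<Rightarrow> real) \<Rightarrow> real" where
  "covF \<beta> n b a S = (if N0 n a = 0 then 1 else
     (\<Sum>j\<in>{j\<in>{..<n}. \<not> a j}.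
        (if (\<Sum>l\<in>{l\<in>{..<n}. a l}. (if S l < S j then cw n b a (b l) else 0)) < \<beta> then 1 else 0))
     / real (N0 n a))"

lemma pro_weight_nonneg: "0 \<le> pro_weight n b a i"
  unfolding pro_weight_def by (auto intro!: sum_nonneg divide_nonneg_nonneg)

lemma thr_char:
  assumes "0 < \<beta>"
  shows "ereal x \<le> wquantile \<beta> (pro_weight n b a) (pro_value n S) {..n} \<longleftrightarrow>
     (\<Sum>l\<in>{l\<in>{..<n}. a l}. (if S l < x then cw n b a (b l) else 0)) < \<beta>"
proof -
  have "ereal x \<le> wquantile \<beta> (pro_weight n b a) (pro_value n S) {..n} \<longleftrightarrow>
     (\<Sum>i\<in>{i\<in>{..n}. pro_value n S i < ereal x}. pro_weight n b a i) < \<beta>"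
    by (rule wq_char) (auto simp: pro_weight_nonneg assms)
  also have "(\<Sum>i\<in>{i\<in>{..n}. pro_value n S i < ereal x}. pro_weight n b a i)
     = (\<Sum>i\<in>{..n}. if pro_value n S i < ereal x then pro_weight n b a i else 0)"
    by (rule sum.inter_filter) simp
  also have "\<dots> = (\<Sum>i\<in>{..<n}. if a i \<and> S i < x then cw n b a (b i) else 0)"
  proof -
    have "{..n} = insert n {..<n}" by auto
    hence "(\<Sum>i\<in>{..n}. if pro_value n S i < ereal x then pro_weight n b a i else 0)
       = (\<Sum>i\<in>{..<n}. if pro_value n S i < ereal x then pro_weight n b a i else 0)"
      by (simp add: pro_value_def)
    also have "\<dots> = (\<Sum>i\<in>{..<n}. if a i \<and> S i < x then cw n b a (b i) else 0)"
      by (intro sum.cong) (auto simp: pro_value_def pro_weight_def cw_def)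
    finally show ?thesis .
  qed
  also have "\<dots> = (\<Sum>l\<in>{l\<in>{..<n}. a l}. (if S l < x then cw n b a (b l) else 0))"
    by (subst sum.inter_filter) (auto intro!: sum.cong)
  finally show ?thesis .
qed

lemma cov_eq:
  assumes "\<alpha> < 1"
  shows "pro_coverage \<alpha> \<epsilon> ph s n \<omega> =
    covF (1 - \<alpha>) n (\<lambda>i. bin \<epsilon> ph (obsX \<omega> i)) (obsA \<omega>) (\<lambda>i. s (obsX \<omega> i) (obsY \<omega> i))"
proof -
  define b where "b = (\<lambda>i. bin \<epsilon> ph (obsX \<omega> i))"
  define a where "a = obsA \<omega>"
  define S where "S = (\<lambda>i. s (obsX \<omega> i) (obsY \<omega> i))"
  have 1: "0 < 1 - \<alpha> \<Longrightarrow> (ereal (s (obsX \<omega> j) (obsY \<omega> j)) \<le> pro_threshold \<alpha> n b a S) \<longleftrightarrow>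
     (\<Sum>l\<in>{l\<in>{..<n}. a l}. (if S l < S j then cw n b a (b l) else 0)) < 1 - \<alpha>" for j
    using thr_char[of "1 - \<alpha>" "S j" n b a S] unfolding pro_threshold_def S_def by simp
  show ?thesis
  proof (cases "N0 n a = 0")
    case True thus ?thesis unfolding pro_coverage_def covF_def a_def by simp
  next
    case False
    have "pro_coverage \<alpha> \<epsilon> ph s n \<omega> = (\<Sum>j\<in>{j\<in>{..<n}. \<not> a j}.
       (if obsY \<omega> j \<in> {y. ereal (s (obsX \<omega> j) y) \<le> pro_threshold \<alpha> n b a S} then 1 else 0)) / real (N0 n a)"
      using False unfolding pro_coverage_def pro_set_def Let_def a_def b_def S_def by simp
    also have "\<dots> = covF (1 - \<alpha>) n b a S"
      using False assms unfolding covF_def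
      by (simp add: 1 cong: sum.cong)
    finally show ?thesis unfolding a_def b_def S_def .
  qed
qed


lemma cw_nonneg: "0 \<le> cw n b a k"
  unfolding cw_def by (auto intro!: divide_nonneg_nonneg)

lemma group_sum:
  fixes \<pi> :: "nat \<Rightarrow> real"
  assumes N0: "N0 n a > 0"
    and \<pi>: "\<And>i j. i < n \<Longrightarrow> j < n \<Longrightarrow> b i = b j \<Longrightarrow> \<pi> i = \<pi> j"
  shows "(\<Sum>j\<in>{j\<in>{..<n}. \<not> a j}. \<pi> j) = real (N0 n a) * (\<Sum>i<n. cw n b a (b i) * \<pi> i)"
proof -
  have L: "(\<Sum>j\<in>{j\<in>{..<n}. \<not> a j}. \<pi> j) = (\<Sum>j<n. if \<not> a j then \<pi> j else 0)"
    by (rule sum.inter_filter) simp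
  also have "\<dots> = (\<Sum>k\<in>b ` {..<n}. \<Sum>j\<in>{j\<in>{..<n}. b j = k}. if \<not> a j then \<pi> j else 0)"
    by (rule sum.image_gen) simp
  also have "\<dots> = (\<Sum>k\<in>b ` {..<n}. real (N0 n a) * (\<Sum>i\<in>{i\<in>{..<n}. b i = k}. cw n b a (b i) * \<pi> i))"
  proof (rule sum.cong[OF refl])
    fix k assume "k \<in> b ` {..<n}"
    then obtain i0 where i0: "i0 < n" "b i0 = k" by auto
    have fib: "\<And>j. j \<in> {j\<in>{..<n}. b j = k} \<Longrightarrow> \<pi> j = \<pi> i0"
    proof -
      fix j assume "j \<in> {j\<in>{..<n}. b j = k}"
      thus "\<pi> j = \<pi> i0" using \<pi>[of j i0] i0 by simp
    qed
    have Nk: "Nk n b k > 0" unfolding Nk_def using i0 by (auto simp: card_gt_0_iff)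
    have "(\<Sum>j\<in>{j\<in>{..<n}. b j = k}. if \<not> a j then \<pi> j else 0)
        = (\<Sum>j\<in>{j\<in>{..<n}. b j = k}. if \<not> a j then \<pi> i0 else 0)"
      using fib by (intro sum.cong) auto
    also have "\<dots> = (\<Sum>j\<in>{j\<in>{j\<in>{..<n}. b j = k}. \<not> a j}. \<pi> i0)"
      by (rule sum.inter_filter[symmetric]) simp
    also have "{j\<in>{j\<in>{..<n}. b j = k}. \<not> a j} = {j\<in>{..<n}. b j = k \<and> \<not> a j}" by auto
    also have "(\<Sum>j\<in>{j\<in>{..<n}. b j = k \<and> \<not> a j}. \<pi> i0) = real (Nk0 n b a k) * \<pi> i0"
      unfolding Nk0_def by simp
    finally have 1: "(\<Sum>j\<in>{j\<in>{..<n}. b j = k}. if \<not> a j then \<pi> j else 0) = real (Nk0 n b a k) * \<pi> i0" .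
    have "(\<Sum>i\<in>{i\<in>{..<n}. b i = k}. cw n b a (b i) * \<pi> i) = (\<Sum>i\<in>{i\<in>{..<n}. b i = k}. cw n b a k * \<pi> i0)"
      using fib by (intro sum.cong) auto
    also have "\<dots> = real (Nk n b k) * (cw n b a k * \<pi> i0)" unfolding Nk_def by simp
    finally have 2: "(\<Sum>i\<in>{i\<in>{..<n}. b i = k}. cw n b a (b i) * \<pi> i) = real (Nk n b k) * (cw n b a k * \<pi> i0)" .
    show "(\<Sum>j\<in>{j\<in>{..<n}. b j = k}. if \<not> a j then \<pi> j else 0) =
      real (N0 n a) * (\<Sum>i\<in>{i\<in>{..<n}. b i = k}. cw n b a (b i) * \<pi> i)"
      unfolding 1 2 using N0 Nk by (simp add: cw_def field_simps)
  qed
  also have "\<dots> = real (N0 n a) * (\<Sum>i<n. cw n b a (b i) * \<pi> i)"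
  proof -
    have "(\<Sum>i<n. cw n b a (b i) * \<pi> i) = (\<Sum>k\<in>b ` {..<n}. \<Sum>i\<in>{i\<in>{..<n}. b i = k}. cw n b a (b i) * \<pi> i)"
      by (rule sum.image_gen) simp
    thus ?thesis by (simp add: sum_distrib_left)
  qed
  finally show ?thesis .
qed

lemma cw_sum1:
  assumes N0: "N0 n a > 0"
  shows "(\<Sum>i<n. cw n b a (b i)) = 1"
proof -
  have "(\<Sum>j\<in>{j\<in>{..<n}. \<not> a j}. (1::real)) = real (N0 n a) * (\<Sum>i<n. cw n b a (b i) * 1)"
    by (rule group_sum[OF N0]) auto
  moreover have "(\<Sum>j\<in>{j\<in>{..<n}. \<not> a j}. (1::real)) = real (N0 n a)" unfolding N0_def by simp
  ultimately show ?thesis using N0 by simp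
qed

lemma quantile_cover:
  fixes c S :: "nat \<Rightarrow> real"
  assumes c: "\<And>i. 0 \<le> c i" and s1: "(\<Sum>i<n. c i) = 1" and b1: "\<beta> \<le> 1"
  shows "\<beta> \<le> (\<Sum>i<n. c i * (if (\<Sum>l<n. if S l < S i then c l else 0) < \<beta> then 1 else 0))"
proof -
  define T where "T = {i\<in>{..<n}. (\<Sum>l<n. if S l < S i then c l else 0) < \<beta>}"
  have eq: "(\<Sum>i<n. c i * (if (\<Sum>l<n. if S l < S i then c l else 0) < \<beta> then 1 else 0)) = (\<Sum>i\<in>T. c i)"
    unfolding T_def by (subst sum.inter_filter) (auto intro!: sum.cong)
  show ?thesis
  proof (cases "{..<n} - T = {}")
    case True
    hence "T = {..<n}" unfolding T_def by auto
    thus ?thesis using eq s1 b1 by simp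
  next
    case False
    define m where "m = Min (S ` ({..<n} - T))"
    have "m \<in> S ` ({..<n} - T)" unfolding m_def using False by (intro Min_in) auto
    then obtain i0 where i0: "i0 \<in> {..<n} - T" "S i0 = m" by auto
    have sub: "{l\<in>{..<n}. S l < S i0} \<subseteq> T"
    proof
      fix l assume l: "l \<in> {l\<in>{..<n}. S l < S i0}"
      show "l \<in> T"
      proof (rule ccontr)
        assume "l \<notin> T"
        hence "m \<le> S l" unfolding m_def using l by (intro Min_le) auto
        with l i0 show False by simp
      qed
    qed
    have "\<beta> \<le> (\<Sum>l<n. if S l < S i0 then c l else 0)" using i0 unfolding T_def by auto
    also have "\<dots> = (\<Sum>l\<in>{l\<in>{..<n}. S l < S i0}. c l)" by (subst sum.inter_filter) auto
    also have "\<dots> \<le> (\<Sum>i\<in>T. c i)" using sub c unfolding T_def by (intro sum_mono2) auto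
    finally show ?thesis using eq by simp
  qed
qed


lemma marg:
  assumes M: "\<And>i. prob_space (M i)" and fin: "finite I" and J: "J \<subseteq> I"
    and f: "f \<in> borel_measurable (PiM J M)"
  shows "(\<integral>\<^sup>+x. f (restrict x J) \<partial>PiM I M) = integral\<^sup>N (PiM J M) f"
proof -
  interpret product_prob_space M I by (rule product_prob_spaceI[OF M])
  have "integral\<^sup>N (PiM J M) f = integral\<^sup>N (distr (PiM I M) (PiM J M) (\<lambda>x. restrict x J)) f"
    using distr_PiM_restrict_finite[OF finite_subset[OF J fin] J] by simp
  also have "\<dots> = (\<integral>\<^sup>+x. f (restrict x J) \<partial>PiM I M)"
    by (rule nn_integral_distr) (auto intro: measurable_restrict_subset[OF J] f)
  finally show ?thesis by simp
qed

lemma comp_meas: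
  assumes "\<And>i. sets (M i) = sets borel" "l \<in> J"
  shows "(\<lambda>S. S l :: real) \<in> borel_measurable (PiM J M)"
  using measurable_component_singleton[OF assms(2), of M] measurable_cong_sets[OF refl assms(1)]
  by blast

lemma if_less_meas:
  fixes f g :: "'a \<Rightarrow> real"
  assumes [measurable]: "f \<in> borel_measurable M" "g \<in> borel_measurable M"
  shows "(\<lambda>x. if f x < g x then (c::real) else 0) \<in> borel_measurable M"
  by measurable

lemma swap_eq:
  fixes \<rho> :: "nat \<Rightarrow> real measure" and c :: "nat \<Rightarrow> real"
  assumes M: "\<And>i. prob_space (\<rho> i)" and sets: "\<And>i. sets (\<rho> i) = sets borel"
    and i: "i < n" and j: "j < n" and eq\<rho>: "\<rho> i = \<rho> j" and eqc: "c i = c j"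
  shows "emeasure (PiM {..<n} \<rho>) {S \<in> space (PiM {..<n} \<rho>). (\<Sum>l<n. if S l < S i then c l else 0) < \<beta>}
       = emeasure (PiM {..<n} \<rho>) {S \<in> space (PiM {..<n} \<rho>). (\<Sum>l<n. if S l < S j then c l else 0) < \<beta>}"
proof -
  define \<tau> where "\<tau> = (\<lambda>m::nat. if m = i then j else if m = j then i else m)"
  have \<tau>\<tau>: "\<tau> (\<tau> m) = m" for m unfolding \<tau>_def by auto
  have bij: "bij_betw \<tau> {..<n} {..<n}"
    by (rule bij_betw_byWitness[where f'=\<tau>]) (auto simp: \<tau>\<tau>, auto simp: \<tau>_def i j)
  have inj: "inj_on \<tau> {..<n}" using bij by (rule bij_betw_imp_inj_on)
  have rng: "\<tau> \<in> {..<n} \<rightarrow> {..<n}" unfolding \<tau>_def using i j by auto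
  have r\<tau>: "(\<lambda>m. \<rho> (\<tau> m)) = \<rho>" unfolding \<tau>_def using eq\<rho> by (auto simp: fun_eq_iff)
  have c\<tau>: "c (\<tau> m) = c m" for m unfolding \<tau>_def using eqc by auto
  let ?P = "PiM {..<n} \<rho>"
  let ?T = "\<lambda>\<omega>. \<lambda>m\<in>{..<n}. \<omega> (\<tau> m)"
  have D: "distr ?P ?P ?T = ?P"
    using distr_PiM_reindex[of "{..<n}" \<rho> \<tau> "{..<n}", OF M inj rng] r\<tau> by simp
  have rt: "\<rho> (\<tau> m) = \<rho> m" for m using r\<tau> by (simp add: fun_eq_iff)
  have Tm: "?T \<in> measurable ?P ?P"
  proof (intro measurable_restrict)
    fix m assume m: "m \<in> {..<n}"
    have "(\<lambda>x. x (\<tau> m)) \<in> measurable ?P (\<rho> (\<tau> m))"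
      by (rule measurable_component_singleton) (use rng m in auto)
    thus "(\<lambda>x. x (\<tau> m)) \<in> measurable ?P (\<rho> m)" using rt by simp
  qed
  note comp = comp_meas[OF sets]
  have setD: "{S \<in> space ?P. (\<Sum>l<n. if S l < S j then c l else 0) < \<beta>} \<in> sets ?P"
  proof -
    have "(\<lambda>S. \<Sum>l<n. if S l < S j then c l else 0) \<in> borel_measurable ?P"
      using j by (intro borel_measurable_sum borel_measurable_if borel_measurable_const) 
         (auto intro!: if_less_meas comp)
    thus ?thesis by measurable
  qed
  have pre: "?T -` {S \<in> space ?P. (\<Sum>l<n. if S l < S j then c l else 0) < \<beta>} \<inter> space ?P
      = {S \<in> space ?P. (\<Sum>l<n. if S l < S i then c l else 0) < \<beta>}"
  proof -
    have eqT: "(\<Sum>l<n. if S (\<tau> l) < S (\<tau> j) then c l else 0) = (\<Sum>l<n. if S l < S i then c l else 0)" for S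
    proof -
      have "(\<Sum>l<n. if S (\<tau> l) < S (\<tau> j) then c l else 0) = (\<Sum>l<n. (\<lambda>l. if S l < S i then c l else 0) (\<tau> l))"
        using j i eqc by (intro sum.cong) (auto simp: \<tau>_def)
      also have "\<dots> = (\<Sum>l<n. if S l < S i then c l else 0)"
        by (rule sum.reindex_bij_betw[OF bij])
      finally show ?thesis .
    qed
    moreover have "S \<in> space ?P \<Longrightarrow> ?T S \<in> space ?P" for S
      using Tm by (rule measurable_space)
    ultimately show ?thesis using j by (auto simp: eqT)
  qed
  have "emeasure ?P {S \<in> space ?P. (\<Sum>l<n. if S l < S j then c l else 0) < \<beta>}
      = emeasure (distr ?P ?P ?T) {S \<in> space ?P. (\<Sum>l<n. if S l < S j then c l else 0) < \<beta>}"
    using D by simp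
  also have "\<dots> = emeasure ?P {S \<in> space ?P. (\<Sum>l<n. if S l < S i then c l else 0) < \<beta>}"
    by (subst emeasure_distr[OF Tm setD]) (simp only: pre)
  finally show ?thesis by simp
qed


lemma ind_less_meas:
  fixes F :: "'a \<Rightarrow> real"
  assumes [measurable]: "F \<in> borel_measurable M"
  shows "(\<lambda>x. if F x < \<beta> then 1 else (0::ennreal)) \<in> borel_measurable M"
  by measurable

lemma fub:
  fixes M :: "nat \<Rightarrow> real measure"
  assumes Mp: "\<And>i. prob_space (M i)" and L: "L \<subseteq> {..<n}" and j: "j < n" "j \<notin> L"
    and f: "f \<in> borel_measurable (PiM (insert j L) M)"
  shows "(\<integral>\<^sup>+S. f (restrict S (insert j L)) \<partial>PiM {..<n} M) = (\<integral>\<^sup>+x. \<integral>\<^sup>+y. f (x(j:=y)) \<partial>M j \<partial>PiM L M)"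
proof -
  interpret product_prob_space M "{..<n}" by (rule product_prob_spaceI[OF Mp])
  have fin: "finite L" using L finite_subset by blast
  have "(\<integral>\<^sup>+S. f (restrict S (insert j L)) \<partial>PiM {..<n} M) = integral\<^sup>N (PiM (insert j L) M) f"
    by (rule marg[OF Mp]) (use L j f in auto)
  also have "\<dots> = (\<integral>\<^sup>+x. \<integral>\<^sup>+y. f (x(j:=y)) \<partial>M j \<partial>PiM L M)"
    by (rule product_nn_integral_insert[OF fin j(2) f])
  finally show ?thesis .
qed

lemma replace:
  fixes \<rho> \<rho>' :: "nat \<Rightarrow> real measure" and c :: "nat \<Rightarrow> real"
  assumes M: "\<And>i. prob_space (\<rho> i)" "\<And>i. prob_space (\<rho>' i)"
    and sets: "\<And>i. sets (\<rho> i) = sets borel" "\<And>i. sets (\<rho>' i) = sets borel"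
    and L: "L \<subseteq> {..<n}" and j: "j < n" "j \<notin> L"
    and eqL: "\<And>l. l \<in> L \<Longrightarrow> \<rho> l = \<rho>' l"
    and dom: "\<And>A. A \<in> sets borel \<Longrightarrow> ennreal r * emeasure (\<rho>' j) A \<le> emeasure (\<rho> j) A"
  shows "ennreal r * emeasure (PiM {..<n} \<rho>') {S \<in> space (PiM {..<n} \<rho>'). (\<Sum>l\<in>L. if S l < S j then c l else 0) < \<beta>}
       \<le> emeasure (PiM {..<n} \<rho>) {S \<in> space (PiM {..<n} \<rho>). (\<Sum>l\<in>L. if S l < S j then c l else 0) < \<beta>}"
proof -
  define g where "g = (\<lambda>S::nat\<Rightarrow>real. if (\<Sum>l\<in>L. if S l < S j then c l else 0) < \<beta> then 1 else (0::ennreal))"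
  define J where "J = insert j L"
  have fin: "finite L" using L finite_subset by blast
  have gJ: "g (restrict S J) = g S" for S
    unfolding g_def J_def by (auto intro!: sum.cong)
  have gmeas: "g \<in> borel_measurable (PiM J M)" if "\<And>i. sets (M i) = sets borel" for M :: "nat \<Rightarrow> real measure"
    unfolding g_def
    by (intro ind_less_meas borel_measurable_sum if_less_meas comp_meas[OF that]) (auto simp: J_def)
  have emeq: "emeasure (PiM {..<n} M) {S \<in> space (PiM {..<n} M). (\<Sum>l\<in>L. if S l < S j then c l else 0) < \<beta>}
     = (\<integral>\<^sup>+S. g (restrict S J) \<partial>PiM {..<n} M)" if "\<And>i. sets (M i) = sets borel" for M :: "nat \<Rightarrow> real measure"
  proof -
    have "{S \<in> space (PiM {..<n} M). (\<Sum>l\<in>L. if S l < S j then c l else 0) < \<beta>} \<in> sets (PiM {..<n} M)"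
    proof -
      have "(\<lambda>S. \<Sum>l\<in>L. if S l < S j then c l else 0) \<in> borel_measurable (PiM {..<n} M)"
        using L j by (intro borel_measurable_sum if_less_meas comp_meas[OF that]) auto
      thus ?thesis by measurable
    qed
    hence "emeasure (PiM {..<n} M) {S \<in> space (PiM {..<n} M). (\<Sum>l\<in>L. if S l < S j then c l else 0) < \<beta>}
        = (\<integral>\<^sup>+S. indicator {S \<in> space (PiM {..<n} M). (\<Sum>l\<in>L. if S l < S j then c l else 0) < \<beta>} S \<partial>PiM {..<n} M)"
      by simp
    also have "\<dots> = (\<integral>\<^sup>+S. g (restrict S J) \<partial>PiM {..<n} M)"
      unfolding gJ by (intro nn_integral_cong) (auto simp: g_def indicator_def)
    finally show ?thesis .
  qed
  have Ax: "{y. (\<Sum>l\<in>L. if x l < y then c l else 0) < \<beta>} \<in> sets borel" for x :: "nat \<Rightarrow> real"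
  proof -
    have "(\<lambda>y. \<Sum>l\<in>L. if x l < y then c l else 0) \<in> borel_measurable borel"
      by (intro borel_measurable_sum if_less_meas) auto
    hence "{y \<in> space borel. (\<Sum>l\<in>L. if x l < y then c l else 0) < \<beta>} \<in> sets borel" by measurable
    thus ?thesis by simp
  qed
  have gupd: "g (x(j:=y)) = indicator {y. (\<Sum>l\<in>L. if x l < y then c l else 0) < \<beta>} y" for x y
  proof -
    have "(\<Sum>l\<in>L. if (x(j:=y)) l < (x(j:=y)) j then c l else 0) = (\<Sum>l\<in>L. if x l < y then c l else 0)"
      using j by (intro sum.cong) auto
    thus ?thesis unfolding g_def by (simp add: indicator_def)
  qed
  have PL: "PiM L \<rho>' = PiM L \<rho>" using eqL by (intro PiM_cong) auto
  have "ennreal r * emeasure (PiM {..<n} \<rho>') {S \<in> space (PiM {..<n} \<rho>'). (\<Sum>l\<in>L. if S l < S j then c l else 0) < \<beta>}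
      = ennreal r * (\<integral>\<^sup>+S. g (restrict S J) \<partial>PiM {..<n} \<rho>')"
    using emeq[OF sets(2)] by simp
  also have "\<dots> = (\<integral>\<^sup>+S. ennreal r * g (restrict S J) \<partial>PiM {..<n} \<rho>')"
    by (rule nn_integral_cmult[symmetric])
       (rule measurable_comp[OF measurable_restrict_subset gmeas[OF sets(2)], unfolded comp_def], use L j J_def in auto)
  also have "\<dots> = (\<integral>\<^sup>+x. \<integral>\<^sup>+y. ennreal r * g (x(j:=y)) \<partial>\<rho>' j \<partial>PiM L \<rho>')"
    unfolding J_def
  proof (rule fub[OF M(2) L j, where f="\<lambda>S. ennreal r * g S"])
    have [measurable]: "g \<in> borel_measurable (PiM (insert j L) \<rho>')" using gmeas[OF sets(2)] J_def by simp
    show "(\<lambda>S. ennreal r * g S) \<in> borel_measurable (PiM (insert j L) \<rho>')" by measurable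
  qed
  also have "\<dots> \<le> (\<integral>\<^sup>+x. \<integral>\<^sup>+y. g (x(j:=y)) \<partial>\<rho> j \<partial>PiM L \<rho>)"
    unfolding PL
  proof (rule nn_integral_mono)
    fix x
    have "(\<integral>\<^sup>+y. ennreal r * g (x(j:=y)) \<partial>\<rho>' j) = ennreal r * emeasure (\<rho>' j) {y. (\<Sum>l\<in>L. if x l < y then c l else 0) < \<beta>}"
      unfolding gupd by (rule nn_integral_cmult_indicator) (use Ax sets in auto)
    also have "\<dots> \<le> emeasure (\<rho> j) {y. (\<Sum>l\<in>L. if x l < y then c l else 0) < \<beta>}"
      by (rule dom[OF Ax])
    also have "\<dots> = (\<integral>\<^sup>+y. g (x(j:=y)) \<partial>\<rho> j)"
      unfolding gupd by (rule nn_integral_indicator[symmetric]) (use Ax sets in auto)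
    finally show "(\<integral>\<^sup>+y. ennreal r * g (x(j:=y)) \<partial>\<rho>' j) \<le> (\<integral>\<^sup>+y. g (x(j:=y)) \<partial>\<rho> j)" .
  qed
  also have "\<dots> = (\<integral>\<^sup>+S. g (restrict S J) \<partial>PiM {..<n} \<rho>)"
    unfolding J_def by (rule fub[OF M(1) L j, symmetric]) (use gmeas[OF sets(1)] J_def in auto)
  also have "\<dots> = emeasure (PiM {..<n} \<rho>) {S \<in> space (PiM {..<n} \<rho>). (\<Sum>l\<in>L. if S l < S j then c l else 0) < \<beta>}"
    using emeq[OF sets(1)] by simp
  finally show ?thesis .
qed


lemma core:
  fixes \<rho>F \<rho>T :: "int \<Rightarrow> real measure"
  assumes P0: "\<And>k. prob_space (\<rho>F k)" and P1: "\<And>k. prob_space (\<rho>T k)"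
    and S0: "\<And>k. sets (\<rho>F k) = sets borel" and S1: "\<And>k. sets (\<rho>T k) = sets borel"
    and dom: "\<And>k A. A \<in> sets borel \<Longrightarrow> ennreal r * emeasure (\<rho>T k) A \<le> emeasure (\<rho>F k) A"
    and r: "0 \<le> r" and \<beta>: "0 < \<beta>" "\<beta> \<le> 1" and N0: "N0 n a > 0"
  shows "r * \<beta> \<le> (\<integral>S. covF \<beta> n b a S \<partial>PiM {..<n} (\<lambda>i. if a i then \<rho>T (b i) else \<rho>F (b i)))"
proof -
  define \<rho> where "\<rho> = (\<lambda>i. if a i then \<rho>T (b i) else \<rho>F (b i))"
  define \<rho>' where "\<rho>' = (\<lambda>i. \<rho>T (b i))"
  define c where "c = (\<lambda>l. cw n b a (b l))"
  define L where "L = {l\<in>{..<n}. a l}"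
  define U where "U = {j\<in>{..<n}. \<not> a j}"
  have Mp: "\<And>i. prob_space (\<rho> i)" "\<And>i. prob_space (\<rho>' i)" unfolding \<rho>_def \<rho>'_def using P0 P1 by auto
  have Ms: "\<And>i. sets (\<rho> i) = sets borel" "\<And>i. sets (\<rho>' i) = sets borel" unfolding \<rho>_def \<rho>'_def using S0 S1 by auto
  let ?P = "PiM {..<n} \<rho>" and ?P' = "PiM {..<n} \<rho>'"
  interpret p: prob_space ?P by (intro prob_space_PiM Mp) 
  interpret p': prob_space ?P' by (intro prob_space_PiM Mp)
  have sp: "space ?P' = space ?P" unfolding space_PiM using Ms[THEN sets_eq_imp_space_eq] by simp
  define D where "D = (\<lambda>j. {S \<in> space ?P. (\<Sum>l\<in>L. if S l < S j then c l else 0) < \<beta>})"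
  define D' where "D' = (\<lambda>j. {S \<in> space ?P. (\<Sum>l<n. if S l < S j then c l else 0) < \<beta>})"
  have cnn: "0 \<le> c l" for l unfolding c_def by (rule cw_nonneg)
  have Dsets: "D j \<in> sets ?P" "D j \<in> sets ?P'" if "j < n" for j
  proof -
    have "(\<lambda>S. \<Sum>l\<in>L. if S l < S j then c l else 0) \<in> borel_measurable ?P"
      using that by (intro borel_measurable_sum if_less_meas comp_meas[OF Ms(1)]) (auto simp: L_def)
    hence "{S \<in> space ?P. (\<Sum>l\<in>L. if S l < S j then c l else 0) < \<beta>} \<in> sets ?P" by measurable
    thus "D j \<in> sets ?P" unfolding D_def .
    thus "D j \<in> sets ?P'" using Ms by (simp add: sets_PiM_cong[OF refl, of _ \<rho> \<rho>'])
  qed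
  have D'sets: "D' j \<in> sets ?P'" if "j < n" for j
  proof -
    have "(\<lambda>S. \<Sum>l<n. if S l < S j then c l else 0) \<in> borel_measurable ?P'"
      using that by (intro borel_measurable_sum if_less_meas comp_meas[OF Ms(2)]) auto
    hence "{S \<in> space ?P'. (\<Sum>l<n. if S l < S j then c l else 0) < \<beta>} \<in> sets ?P'" by measurable
    thus ?thesis unfolding D'_def sp .
  qed
  have D'sub: "D' j \<inter> space ?P' = D' j" for j unfolding D'_def sp by auto
  have intD: "integrable ?P (indicator (D j) :: _ \<Rightarrow> real)" if "j < n" for j
    by (rule integrable_real_indicator[OF Dsets(1)[OF that]]) (simp add: less_top[symmetric])
  have intD': "integrable ?P' (indicator (D' j) :: _ \<Rightarrow> real)" if "j < n" for j
    by (rule integrable_real_indicator[OF D'sets[OF that]]) (simp add: less_top[symmetric])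
  have cov: "covF \<beta> n b a S = (\<Sum>j\<in>U. indicator (D j) S) / real (N0 n a)" if "S \<in> space ?P" for S
  proof -
    have "covF \<beta> n b a S = (\<Sum>j\<in>U. (if (\<Sum>l\<in>L. if S l < S j then c l else 0) < \<beta> then 1 else 0)) / real (N0 n a)"
      using N0 unfolding covF_def U_def L_def c_def by simp
    also have "\<dots> = (\<Sum>j\<in>U. indicator (D j) S) / real (N0 n a)"
      using that by (intro arg_cong2[where f="(/)"] sum.cong refl) (auto simp: D_def indicator_def)
    finally show ?thesis .
  qed
  have int1: "(\<integral>S. covF \<beta> n b a S \<partial>?P) = (\<Sum>j\<in>U. measure ?P (D j)) / real (N0 n a)"
  proof -
    have "(\<integral>S. covF \<beta> n b a S \<partial>?P) = (\<integral>S. (\<Sum>j\<in>U. indicator (D j) S) / real (N0 n a) \<partial>?P)"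
      by (rule Bochner_Integration.integral_cong[OF refl cov])
    also have "\<dots> = (\<Sum>j\<in>U. (\<integral>S. indicator (D j) S \<partial>?P)) / real (N0 n a)"
    proof -
      have "(\<integral>S. (\<Sum>j\<in>U. indicator (D j) S :: real) \<partial>?P) = (\<Sum>j\<in>U. (\<integral>S. indicator (D j) S \<partial>?P))"
        by (rule Bochner_Integration.integral_sum) (auto intro!: intD simp: U_def)
      thus ?thesis by simp
    qed
    also have "\<dots> = (\<Sum>j\<in>U. measure ?P (D j)) / real (N0 n a)"
      by (intro arg_cong2[where f="(/)"] sum.cong refl) (auto intro!: Dsets simp: U_def Int_absorb2 D_def)
    finally show ?thesis .
  qed
  \<comment> \<open>Step 2: replacement of the missing-point distribution\<close>
  have rep: "r * measure ?P' (D' j) \<le> measure ?P (D j)" if j: "j \<in> U" for j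
  proof -
    have jn: "j < n" "j \<notin> L" using j unfolding U_def L_def by auto
    have aj: "\<not> a j" using j unfolding U_def by auto
    have "ennreal r * emeasure ?P' {S \<in> space ?P'. (\<Sum>l\<in>L. if S l < S j then c l else 0) < \<beta>}
       \<le> emeasure ?P {S \<in> space ?P. (\<Sum>l\<in>L. if S l < S j then c l else 0) < \<beta>}"
      by (rule replace[OF Mp(1) Mp(2) Ms(1) Ms(2) _ jn])
         (auto simp: L_def \<rho>_def \<rho>'_def dom aj jn)
    hence "ennreal r * emeasure ?P' (D j) \<le> emeasure ?P (D j)" unfolding D_def sp .
    hence "ennreal r * ennreal (measure ?P' (D j)) \<le> ennreal (measure ?P (D j))"
      by (simp add: p.emeasure_eq_measure p'.emeasure_eq_measure)
    hence 1: "r * measure ?P' (D j) \<le> measure ?P (D j)"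
      using r by (simp add: ennreal_mult'[symmetric] ennreal_le_iff)
    have "D' j \<subseteq> D j"
    proof
      fix S assume "S \<in> D' j"
      hence S: "S \<in> space ?P" "(\<Sum>l<n. if S l < S j then c l else 0) < \<beta>" unfolding D'_def by auto
      have "(\<Sum>l\<in>L. if S l < S j then c l else 0) \<le> (\<Sum>l<n. if S l < S j then c l else 0)"
        by (rule sum_mono2) (auto simp: L_def cnn)
      thus "S \<in> D j" using S unfolding D_def by auto
    qed
    hence "measure ?P' (D' j) \<le> measure ?P' (D j)"
      by (intro p'.finite_measure_mono Dsets jn)
    thus ?thesis using 1 r by (meson mult_left_mono order_trans)
  qed
  \<comment> \<open>Step 3: exchangeability\<close>
  define \<pi> where "\<pi> = (\<lambda>j. measure ?P' (D' j))"
  have exch: "\<pi> i = \<pi> j" if "i < n" "j < n" "b i = b j" for i j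
  proof -
    have "emeasure ?P' (D' i) = emeasure ?P' (D' j)"
      unfolding D'_def sp[symmetric]
      by (rule swap_eq[OF Mp(2) Ms(2) that(1,2)]) (auto simp: \<rho>'_def c_def that(3))
    thus ?thesis unfolding \<pi>_def by (simp add: p'.emeasure_eq_measure)
  qed
  have grp: "(\<Sum>j\<in>U. \<pi> j) = real (N0 n a) * (\<Sum>i<n. c i * \<pi> i)"
    unfolding U_def c_def by (rule group_sum[OF N0 exch])
  \<comment> \<open>Step 4: quantile coverage under the exchangeable law\<close>
  have q: "\<beta> \<le> (\<Sum>i<n. c i * \<pi> i)"
  proof -
    have s1: "(\<Sum>i<n. c i) = 1" unfolding c_def by (rule cw_sum1[OF N0])
    have "\<beta> \<le> (\<integral>S. (\<Sum>i<n. c i * indicator (D' i) S) \<partial>?P')"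
    proof (rule p'.integral_ge_const)
      show "integrable ?P' (\<lambda>S. \<Sum>i<n. c i * indicator (D' i) S)"
        by (intro Bochner_Integration.integrable_sum integrable_mult_right intD') auto
      show "AE S in ?P'. \<beta> \<le> (\<Sum>i<n. c i * indicator (D' i) S)"
      proof (rule AE_I2)
        fix S assume S: "S \<in> space ?P'"
        have "\<beta> \<le> (\<Sum>i<n. c i * (if (\<Sum>l<n. if S l < S i then c l else 0) < \<beta> then 1 else 0))"
          by (rule quantile_cover[OF cnn s1 \<beta>(2)])
        also have "\<dots> = (\<Sum>i<n. c i * indicator (D' i) S)"
          using S sp by (intro sum.cong) (auto simp: D'_def indicator_def)
        finally show "\<beta> \<le> (\<Sum>i<n. c i * indicator (D' i) S)" .
      qed
    qed
    also have "\<dots> = (\<Sum>i<n. c i * \<pi> i)"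
      by (subst Bochner_Integration.integral_sum) (auto intro!: integrable_mult_right intD' sum.cong simp: \<pi>_def D'sub)
    finally show ?thesis .
  qed
  have "r * \<beta> * real (N0 n a) \<le> r * (\<Sum>j\<in>U. \<pi> j)"
  proof -
    have "r * \<beta> * real (N0 n a) = r * (real (N0 n a) * \<beta>)" by simp
    also have "\<dots> \<le> r * (real (N0 n a) * (\<Sum>i<n. c i * \<pi> i))"
      using q r by (intro mult_left_mono) auto
    finally show ?thesis unfolding grp .
  qed
  also have "\<dots> = (\<Sum>j\<in>U. r * \<pi> j)" by (simp add: sum_distrib_left)
  also have "\<dots> \<le> (\<Sum>j\<in>U. measure ?P (D j))"
    unfolding \<pi>_def by (intro sum_mono rep)
  finally have "r * \<beta> \<le> (\<Sum>j\<in>U. measure ?P (D j)) / real (N0 n a)"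
    using N0 by (simp add: field_simps)
  thus ?thesis unfolding int1[unfolded \<rho>_def] \<rho>_def .
qed


locale setting =
  fixes MX :: "'x measure" and MY :: "'y measure" and Q :: "('x \<times> 'y) measure"
    and p ph :: "'x \<Rightarrow> real" and s :: "'x \<Rightarrow> 'y \<Rightarrow> real" and \<alpha> \<epsilon> :: real
  assumes Qp: "prob_space Q"
    and Qs: "sets Q = sets (MX \<Otimes>\<^sub>M MY)"
    and pm: "p \<in> borel_measurable MX"
    and phm: "ph \<in> borel_measurable MX"
    and sm: "(\<lambda>(x, y). s x y) \<in> borel_measurable (MX \<Otimes>\<^sub>M MY)"
    and pr: "\<forall>x\<in>space MX. 0 < p x \<and> p x < 1"
    and phr: "\<forall>x\<in>space MX. 0 < ph x \<and> ph x < 1"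
    and \<alpha>: "0 < \<alpha>" "\<alpha> < 1" and \<epsilon>: "0 < \<epsilon>"
    and bdd: "bdd_above ((\<lambda>x. \<bar>ln (odds_ratio p ph x)\<bar>) ` space MX)"
begin

abbreviation "Ob \<equiv> mar_obs Q p"

lemma spQ: "space Q = space MX \<times> space MY"
  using sets_eq_imp_space_eq[OF Qs] by (simp add: space_pair_measure)

lemma pfst_meas[measurable]: "(\<lambda>u. p (fst u)) \<in> borel_measurable Q"
proof -
  have "(\<lambda>u. p (fst u)) \<in> borel_measurable (MX \<Otimes>\<^sub>M MY)"
    using measurable_comp[OF measurable_fst pm] by (simp add: comp_def)
  thus ?thesis by (subst measurable_cong_sets[OF Qs refl])
qed

lemma phfst_meas[measurable]: "(\<lambda>u. ph (fst u)) \<in> borel_measurable Q"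
proof -
  have "(\<lambda>u. ph (fst u)) \<in> borel_measurable (MX \<Otimes>\<^sub>M MY)"
    using measurable_comp[OF measurable_fst phm] by (simp add: comp_def)
  thus ?thesis by (subst measurable_cong_sets[OF Qs refl])
qed

lemma s_meas[measurable]: "(\<lambda>u. s (fst u) (snd u)) \<in> borel_measurable Q"
proof -
  have "(\<lambda>u. s (fst u) (snd u)) \<in> borel_measurable (MX \<Otimes>\<^sub>M MY)"
    using sm by (simp add: case_prod_beta')
  thus ?thesis by (subst measurable_cong_sets[OF Qs refl])
qed

lemma wt_meas: "(\<lambda>((x,y),a). ennreal (if a then p x else 1 - p x)) \<in> borel_measurable (Q \<Otimes>\<^sub>M count_space UNIV)"
proof -
  have "(\<lambda>z. ennreal (if snd z then p (fst (fst z)) else 1 - p (fst (fst z)))) \<in> borel_measurable (Q \<Otimes>\<^sub>M count_space UNIV)"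
    by measurable
  thus ?thesis by (simp add: case_prod_beta')
qed

lemma sets_O[measurable_cong]: "sets Ob = sets (Q \<Otimes>\<^sub>M count_space UNIV)"
  unfolding mar_obs_def by simp

lemma space_O: "space Ob = space Q \<times> UNIV"
  unfolding mar_obs_def by (simp add: space_pair_measure)

lemma O_integral:
  assumes h: "h \<in> borel_measurable (Q \<Otimes>\<^sub>M count_space UNIV)"
  shows "(\<integral>\<^sup>+z. h z \<partial>Ob) = (\<integral>\<^sup>+u. ennreal (p (fst u)) * h (u, True) + ennreal (1 - p (fst u)) * h (u, False) \<partial>Q)"
proof -
  interpret Q: prob_space Q by (rule Qp)
  interpret C: sigma_finite_measure "count_space (UNIV::bool set)"
    by (rule sigma_finite_measure_count_space_countable) simp
  have "(\<integral>\<^sup>+z. h z \<partial>Ob) = (\<integral>\<^sup>+z. (\<lambda>((x,y),a). ennreal (if a then p x else 1 - p x)) z * h z \<partial>(Q \<Otimes>\<^sub>M count_space UNIV))"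
    unfolding mar_obs_def by (rule nn_integral_density[OF wt_meas h])
  also have "\<dots> = (\<integral>\<^sup>+u. \<integral>\<^sup>+a. (\<lambda>((x,y),a). ennreal (if a then p x else 1 - p x)) (u,a) * h (u,a) \<partial>count_space UNIV \<partial>Q)"
    by (rule C.nn_integral_fst[symmetric]) (use wt_meas h in measurable)
  also have "\<dots> = (\<integral>\<^sup>+u. ennreal (p (fst u)) * h (u, True) + ennreal (1 - p (fst u)) * h (u, False) \<partial>Q)"
  proof (rule nn_integral_cong)
    fix u :: "'x \<times> 'y"
    have U: "(UNIV :: bool set) = {True, False}" by auto
    show "(\<integral>\<^sup>+a. (\<lambda>((x,y),a). ennreal (if a then p x else 1 - p x)) (u,a) * h (u,a) \<partial>count_space UNIV)
      = ennreal (p (fst u)) * h (u, True) + ennreal (1 - p (fst u)) * h (u, False)"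
      by (subst nn_integral_count_space_finite) (auto simp: U case_prod_beta')
  qed
  finally show ?thesis .
qed

lemma O_prob: "prob_space Ob"
proof
  have "emeasure Ob (space Ob) = (\<integral>\<^sup>+z. 1 \<partial>Ob)" by simp
  also have "\<dots> = (\<integral>\<^sup>+u. ennreal (p (fst u)) * 1 + ennreal (1 - p (fst u)) * 1 \<partial>Q)"
    by (rule O_integral) simp
  also have "\<dots> = (\<integral>\<^sup>+u. 1 \<partial>Q)"
  proof (rule nn_integral_cong)
    fix u assume "u \<in> space Q"
    hence "0 < p (fst u)" "p (fst u) < 1" using pr spQ by auto
    thus "ennreal (p (fst u)) * 1 + ennreal (1 - p (fst u)) * 1 = 1"
      by (simp add: ennreal_plus[symmetric] del: ennreal_plus)
  qed
  also have "\<dots> = 1" using prob_space.emeasure_space_1[OF Qp] by simp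
  finally show "emeasure Ob (space Ob) = 1" .
qed

end


lemma zk_bounds:
  fixes y \<epsilon> :: real
  assumes y: "0 < y" "y < 1" and e: "0 < \<epsilon>"
  shows "zk \<epsilon> k \<le> y \<longleftrightarrow> (1+\<epsilon>) powi k \<le> y / (1 - y)"
    and "y < zk \<epsilon> k \<longleftrightarrow> y / (1 - y) < (1+\<epsilon>) powi k"
proof -
  define t where "t = (1+\<epsilon>) powi k"
  have t: "0 < t" unfolding t_def using e by (intro zero_less_power_int) auto
  have z: "zk \<epsilon> k = t / (1 + t)" unfolding zk_def t_def ..
  show "zk \<epsilon> k \<le> y \<longleftrightarrow> (1+\<epsilon>) powi k \<le> y / (1 - y)"
    unfolding z t_def[symmetric] using t y by (simp add: divide_le_eq le_divide_eq algebra_simps)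
  show "y < zk \<epsilon> k \<longleftrightarrow> y / (1 - y) < (1+\<epsilon>) powi k"
    unfolding z t_def[symmetric] using t y by (simp add: less_divide_eq divide_less_eq algebra_simps)
qed

lemma bin_iff:
  fixes y \<epsilon> :: real
  assumes y: "0 < y" "y < 1" and e: "0 < \<epsilon>"
  shows "(zk \<epsilon> k \<le> y \<and> y < zk \<epsilon> (k+1)) \<longleftrightarrow> k = \<lfloor>log (1+\<epsilon>) (y / (1 - y))\<rfloor>"
proof -
  define u where "u = y / (1 - y)"
  have u: "0 < u" unfolding u_def using y by simp
  have q: "1 < 1 + \<epsilon>" using e by simp
  have pw: "(1+\<epsilon>) powi m = (1+\<epsilon>) powr real_of_int m" for m
    using e by (subst powr_real_of_int') auto
  have "(zk \<epsilon> k \<le> y \<and> y < zk \<epsilon> (k+1)) \<longleftrightarrow> ((1+\<epsilon>) powi k \<le> u \<and> u < (1+\<epsilon>) powi (k+1))"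
    using zk_bounds[OF y e] unfolding u_def by simp
  also have "\<dots> \<longleftrightarrow> (real_of_int k \<le> log (1+\<epsilon>) u \<and> log (1+\<epsilon>) u < real_of_int k + 1)"
    unfolding pw using le_log_iff[OF q u, of "real_of_int k"] log_less_iff[OF q u, of "real_of_int (k+1)"] by simp
  also have "\<dots> \<longleftrightarrow> k = \<lfloor>log (1+\<epsilon>) u\<rfloor>" by (simp add: floor_eq_iff eq_commute[of k])
  finally show ?thesis unfolding u_def .
qed

lemma bin_eq:
  assumes "0 < ph x" "ph x < 1" "0 < \<epsilon>"
  shows "bin \<epsilon> ph x = \<lfloor>log (1+\<epsilon>) (ph x / (1 - ph x))\<rfloor>"
  unfolding bin_def using bin_iff[OF assms] by (intro the_equality) auto

lemma bin_bounds:
  assumes "0 < ph x" "ph x < 1" "0 < \<epsilon>"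
  shows "(1+\<epsilon>) powi (bin \<epsilon> ph x) \<le> ph x / (1 - ph x)" "ph x / (1 - ph x) < (1+\<epsilon>) powi (bin \<epsilon> ph x + 1)"
  using bin_iff[OF assms, of "bin \<epsilon> ph x"] bin_eq[where ph=ph and x=x, OF assms] zk_bounds[OF assms] by auto

context setting
begin

lemma bin_meas: "(\<lambda>x. bin \<epsilon> ph x) \<in> measurable MX (count_space UNIV)"
proof -
  define h where "h = (\<lambda>x. log (1+\<epsilon>) (ph x / (1 - ph x)))"
  have hm[measurable]: "h \<in> borel_measurable MX" unfolding h_def using phm by measurable
  have "(\<lambda>x. \<lfloor>h x\<rfloor>) \<in> measurable MX (count_space UNIV)"
  proof (subst measurable_count_space_eq2_countable, safe)
    fix a :: int
    have "(\<lambda>x. real_of_int \<lfloor>h x\<rfloor>) \<in> borel_measurable MX" by measurable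
    hence "{x \<in> space MX. real_of_int \<lfloor>h x\<rfloor> = real_of_int a} \<in> sets MX" by measurable
    thus "(\<lambda>x. \<lfloor>h x\<rfloor>) -` {a} \<inter> space MX \<in> sets MX" by (simp add: vimage_def Int_def conj_commute)
  qed auto
  moreover have "x \<in> space MX \<Longrightarrow> bin \<epsilon> ph x = \<lfloor>h x\<rfloor>" for x
    using phr \<epsilon> unfolding h_def by (intro bin_eq) auto
  ultimately show ?thesis by (metis (mono_tags, lifting) measurable_cong)
qed

definition "Lsup = (SUP x\<in>space MX. \<bar>ln (odds_ratio p ph x)\<bar>)"
definition "Rc = (1 + \<epsilon>) * exp (2 * Lsup)"

lemma odds_bound:
  assumes x: "x \<in> space MX" and x': "x' \<in> space MX" and b: "bin \<epsilon> ph x = bin \<epsilon> ph x'"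
  shows "p x / (1 - p x) \<le> Rc * (p x' / (1 - p x'))"
proof -
  define q where "q = 1 + \<epsilon>"
  define u where "u = (\<lambda>x. ph x / (1 - ph x))"
  define po where "po = (\<lambda>x. p x / (1 - p x))"
  have q: "1 < q" unfolding q_def using \<epsilon> by simp
  have phx: "0 < ph x" "ph x < 1" "0 < ph x'" "ph x' < 1" using phr x x' by auto
  have px: "0 < p x" "p x < 1" "0 < p x'" "p x' < 1" using pr x x' by auto
  have up: "0 < u x" "0 < u x'" unfolding u_def using phx by auto
  have pop: "0 < po x" "0 < po x'" unfolding po_def using px by auto
  have b1: "u x < q * u x'"
  proof -
    have "u x < q powi (bin \<epsilon> ph x + 1)" using bin_bounds(2)[where ph=ph and x=x, OF phx(1,2) \<epsilon>] unfolding u_def q_def .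
    also have "\<dots> = q * q powi (bin \<epsilon> ph x')" using q b by (simp add: power_int_add)
    also have "\<dots> \<le> q * u x'"
      using mult_left_mono[OF bin_bounds(1)[where ph=ph and x=x', OF phx(3,4) \<epsilon>], of q] q unfolding u_def q_def by simp
    finally show ?thesis .
  qed
  have orx: "odds_ratio p ph y = po y / u y" for y unfolding odds_ratio_def po_def u_def ..
  have L: "\<bar>ln (po y / u y)\<bar> \<le> Lsup" if "y \<in> space MX" for y
    unfolding Lsup_def orx[symmetric] by (rule cSUP_upper[OF that bdd])
  have r1: "po x / u x \<le> exp Lsup"
  proof -
    have "ln (po x / u x) \<le> Lsup" using L[OF x] by simp
    hence "exp (ln (po x / u x)) \<le> exp Lsup" by simp
    thus ?thesis using pop up by simp
  qed
  have r2: "exp (- Lsup) \<le> po x' / u x'"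
  proof -
    have "- Lsup \<le> ln (po x' / u x')" using L[OF x'] by simp
    hence "exp (- Lsup) \<le> exp (ln (po x' / u x'))" by simp
    thus ?thesis using pop up by simp
  qed
  have a1: "po x \<le> exp Lsup * u x" using r1 up by (simp add: divide_le_eq)
  have a2: "u x' \<le> exp Lsup * po x'"
  proof -
    have "exp (- Lsup) * u x' \<le> po x'" using r2 up by (simp add: le_divide_eq)
    hence "exp Lsup * (exp (- Lsup) * u x') \<le> exp Lsup * po x'" by simp
    thus ?thesis by (simp add: exp_minus field_simps)
  qed
  have "po x \<le> exp Lsup * u x" by (rule a1)
  also have "\<dots> \<le> exp Lsup * (q * u x')" using b1 by simp
  also have "\<dots> \<le> exp Lsup * (q * (exp Lsup * po x'))" using a2 q by simp
  also have "\<dots> = Rc * po x'" proof -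
    have "exp (2 * Lsup) = exp Lsup * exp Lsup" by (metis exp_add mult_2)
    thus ?thesis unfolding Rc_def q_def by (simp add: field_simps)
  qed
  finally show ?thesis unfolding po_def .
qed

end


context setting
begin

lemma binQ_meas[measurable]: "(\<lambda>u. bin \<epsilon> ph (fst u)) \<in> measurable Q (count_space UNIV)"
proof -
  have "(\<lambda>u. bin \<epsilon> ph (fst u)) \<in> measurable (MX \<Otimes>\<^sub>M MY) (count_space UNIV)"
    using measurable_comp[OF measurable_fst bin_meas] by (simp add: comp_def)
  thus ?thesis by (subst measurable_cong_sets[OF Qs refl])
qed

definition "Bk k A = {u \<in> space Q. bin \<epsilon> ph (fst u) = k \<and> s (fst u) (snd u) \<in> A}"
definition "wt a0 u = (if a0 then p (fst u) else 1 - p (fst u))"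
definition "Gk a0 k A = (\<integral>\<^sup>+u. ennreal (wt a0 u) * indicator (Bk k A) u \<partial>Q)"

lemma Bk_sets[measurable]: "A \<in> sets borel \<Longrightarrow> Bk k A \<in> sets Q"
proof -
  assume A: "A \<in> sets borel"
  have 1: "{u \<in> space Q. bin \<epsilon> ph (fst u) = k} \<in> sets Q" by measurable
  have 2: "(\<lambda>u. s (fst u) (snd u)) -` A \<inter> space Q \<in> sets Q" by (rule measurable_sets[OF s_meas A])
  have "Bk k A = {u \<in> space Q. bin \<epsilon> ph (fst u) = k} \<inter> ((\<lambda>u. s (fst u) (snd u)) -` A \<inter> space Q)"
    unfolding Bk_def by auto
  thus ?thesis using 1 2 by auto
qed

lemma wtQ_meas[measurable]: "(\<lambda>u. ennreal (wt a0 u)) \<in> borel_measurable Q"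
  unfolding wt_def by measurable

lemma pointwise_odds:
  assumes u: "u \<in> space Q" and u': "u' \<in> space Q" and b: "bin \<epsilon> ph (fst u) = bin \<epsilon> ph (fst u')"
  shows "p (fst u) * (1 - p (fst u')) \<le> Rc * (1 - p (fst u)) * p (fst u')"
proof -
  have x: "fst u \<in> space MX" "fst u' \<in> space MX" using u u' spQ by auto
  have px: "0 < p (fst u)" "p (fst u) < 1" "0 < p (fst u')" "p (fst u') < 1" using pr x by auto
  have "p (fst u) / (1 - p (fst u)) \<le> Rc * (p (fst u') / (1 - p (fst u')))"
    by (rule odds_bound[OF x b])
  hence "p (fst u) / (1 - p (fst u)) * ((1 - p (fst u)) * (1 - p (fst u'))) \<le> Rc * (p (fst u') / (1 - p (fst u'))) * ((1 - p (fst u)) * (1 - p (fst u')))"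
    using px by (intro mult_right_mono) auto
  moreover have "p (fst u) / (1 - p (fst u)) * ((1 - p (fst u)) * (1 - p (fst u'))) = p (fst u) * (1 - p (fst u'))"
    using px by (simp add: field_simps)
  moreover have "Rc * (p (fst u') / (1 - p (fst u'))) * ((1 - p (fst u)) * (1 - p (fst u'))) = Rc * (1 - p (fst u)) * p (fst u')"
    using px by (simp add: field_simps)
  ultimately show ?thesis by simp
qed

lemma Lsup_nonneg: "0 \<le> Lsup"
proof -
  have "space Q \<noteq> {}" using prob_space.not_empty[OF Qp] .
  then obtain x where "x \<in> space MX" using spQ by auto
  hence "\<bar>ln (odds_ratio p ph x)\<bar> \<le> Lsup" unfolding Lsup_def by (rule cSUP_upper[OF _ bdd])
  thus ?thesis by simp
qed

lemma Rc_ge1: "1 \<le> Rc"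
proof -
  have "1 \<le> exp (2 * Lsup)" using Lsup_nonneg by simp
  moreover have "1 \<le> 1 + \<epsilon>" using \<epsilon> by simp
  ultimately have "1 * 1 \<le> (1 + \<epsilon>) * exp (2 * Lsup)" using \<epsilon> by (intro mult_mono) auto
  thus ?thesis unfolding Rc_def by simp
qed

lemma enn_mult_le:
  fixes a b c d :: real
  assumes "0 \<le> a" "0 \<le> b" "0 \<le> c" "0 \<le> d" "a * b \<le> c * d"
  shows "ennreal a * ennreal b \<le> ennreal c * ennreal d"
  using assms by (simp add: ennreal_mult[symmetric] ennreal_leI)

lemma key_ineq:
  assumes A: "A \<in> sets borel"
  shows "Gk True k A * Gk False k UNIV \<le> ennreal Rc * Gk False k A * Gk True k UNIV"
proof -
  have R0: "0 \<le> Rc" using Rc_ge1 by simp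
  have step1: "ennreal (p (fst u)) * Gk False k UNIV \<le> ennreal (Rc * (1 - p (fst u))) * Gk True k UNIV"
    if u: "u \<in> Bk k A" for u
  proof -
    have uQ: "u \<in> space Q" and ub: "bin \<epsilon> ph (fst u) = k" using u unfolding Bk_def by auto
    have pu: "0 < p (fst u)" "p (fst u) < 1" using pr uQ spQ by auto
    have "ennreal (p (fst u)) * Gk False k UNIV = (\<integral>\<^sup>+u'. ennreal (p (fst u)) * (ennreal (wt False u') * indicator (Bk k UNIV) u') \<partial>Q)"
      unfolding Gk_def by (rule nn_integral_cmult[symmetric]) measurable
    also have "\<dots> \<le> (\<integral>\<^sup>+u'. ennreal (Rc * (1 - p (fst u))) * (ennreal (wt True u') * indicator (Bk k UNIV) u') \<partial>Q)"
    proof (rule nn_integral_mono)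
      fix u' assume u': "u' \<in> space Q"
      show "ennreal (p (fst u)) * (ennreal (wt False u') * indicator (Bk k UNIV) u')
        \<le> ennreal (Rc * (1 - p (fst u))) * (ennreal (wt True u') * indicator (Bk k UNIV) u')"
      proof (cases "u' \<in> Bk k UNIV")
        case True
        hence b': "bin \<epsilon> ph (fst u') = k" unfolding Bk_def by auto
        have pu': "0 < p (fst u')" "p (fst u') < 1" using pr u' spQ by auto
        have "p (fst u) * (1 - p (fst u')) \<le> Rc * (1 - p (fst u)) * p (fst u')"
          using pointwise_odds[OF uQ u'] ub b' by simp
        hence "ennreal (p (fst u)) * ennreal (1 - p (fst u')) \<le> ennreal (Rc * (1 - p (fst u))) * ennreal (p (fst u'))"
          using pu pu' R0 by (intro enn_mult_le) auto
        thus ?thesis using True unfolding wt_def by simp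
      qed simp
    qed
    also have "\<dots> = ennreal (Rc * (1 - p (fst u))) * Gk True k UNIV"
      unfolding Gk_def by (rule nn_integral_cmult) measurable
    finally show ?thesis .
  qed
  have "Gk True k A * Gk False k UNIV = (\<integral>\<^sup>+u. ennreal (wt True u) * indicator (Bk k A) u * Gk False k UNIV \<partial>Q)"
    unfolding Gk_def[of True] by (rule nn_integral_multc[symmetric]) (use A in measurable)
  also have "\<dots> \<le> (\<integral>\<^sup>+u. ennreal Rc * (ennreal (wt False u) * indicator (Bk k A) u) * Gk True k UNIV \<partial>Q)"
  proof (rule nn_integral_mono)
    fix u assume "u \<in> space Q"
    show "ennreal (wt True u) * indicator (Bk k A) u * Gk False k UNIV
       \<le> ennreal Rc * (ennreal (wt False u) * indicator (Bk k A) u) * Gk True k UNIV"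
    proof (cases "u \<in> Bk k A")
      case True
      have "ennreal (p (fst u)) * Gk False k UNIV \<le> ennreal (Rc * (1 - p (fst u))) * Gk True k UNIV"
        by (rule step1[OF True])
      moreover have "0 \<le> 1 - p (fst u)" using True pr spQ unfolding Bk_def by auto
      hence "ennreal (Rc * (1 - p (fst u))) = ennreal Rc * ennreal (1 - p (fst u))"
        using R0 by (intro ennreal_mult) 
      ultimately show ?thesis using True unfolding wt_def by (simp add: mult.assoc mult.commute mult.left_commute)
    qed simp
  qed
  also have "\<dots> = ennreal Rc * Gk False k A * Gk True k UNIV"
  proof -
    have "(\<integral>\<^sup>+u. ennreal Rc * (ennreal (wt False u) * indicator (Bk k A) u) * Gk True k UNIV \<partial>Q)
       = (\<integral>\<^sup>+u. ennreal Rc * (ennreal (wt False u) * indicator (Bk k A) u) \<partial>Q) * Gk True k UNIV"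
      by (rule nn_integral_multc) (use A in measurable)
    also have "(\<integral>\<^sup>+u. ennreal Rc * (ennreal (wt False u) * indicator (Bk k A) u) \<partial>Q) = ennreal Rc * Gk False k A"
      unfolding Gk_def by (rule nn_integral_cmult) (use A in measurable)
    finally show ?thesis .
  qed
  finally show ?thesis .
qed

end


context setting
begin

definition "binz z = bin \<epsilon> ph (fst (fst z))"
definition "\<sigma>z z = s (fst (fst z)) (snd (fst z))"
definition "Cz k a0 = {z \<in> space Ob. binz z = k \<and> snd z = a0}"
definition "mz k a0 = measure Ob (Cz k a0)"
definition "Pact k a0 = density Ob (\<lambda>z. ennreal (1 / mz k a0) * indicator (Cz k a0) z)"
definition "Pk k a0 = (if 0 < mz k True \<and> 0 < mz k False then Pact k a0
    else if 0 < mz k False then Pact k False else if 0 < mz k True then Pact k True else Ob)"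
definition "\<rho>a a0 k = distr (Pk k a0) borel \<sigma>z"

lemma binz_meas[measurable]: "binz \<in> measurable Ob (count_space UNIV)"
proof -
  have "(\<lambda>z. bin \<epsilon> ph (fst (fst z))) \<in> measurable (Q \<Otimes>\<^sub>M count_space UNIV) (count_space UNIV)" by measurable
  thus ?thesis unfolding binz_def by (subst measurable_cong_sets[OF sets_O refl])
qed

lemma snd_meas[measurable]: "snd \<in> measurable Ob (count_space UNIV)"
  by (subst measurable_cong_sets[OF sets_O refl]) measurable

lemma \<sigma>z_meas[measurable]: "\<sigma>z \<in> borel_measurable Ob"
proof -
  have "(\<lambda>z. s (fst (fst z)) (snd (fst z))) \<in> borel_measurable (Q \<Otimes>\<^sub>M count_space UNIV)" by measurable
  thus ?thesis unfolding \<sigma>z_def by (subst measurable_cong_sets[OF sets_O refl])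
qed

lemma Cz_sets[measurable]: "Cz k a0 \<in> sets Ob"
  unfolding Cz_def by measurable

lemma Oeq:
  assumes A: "A \<in> sets borel"
  shows "emeasure Ob ({z \<in> space Ob. \<sigma>z z \<in> A} \<inter> Cz k a0) = Gk a0 k A"
proof -
  have E: "{z \<in> space Ob. \<sigma>z z \<in> A} \<inter> Cz k a0 \<in> sets Ob"
  proof -
    have "{z \<in> space Ob. \<sigma>z z \<in> A} = \<sigma>z -` A \<inter> space Ob" by auto
    thus ?thesis using measurable_sets[OF \<sigma>z_meas A] Cz_sets by (metis sets.Int)
  qed
  have "emeasure Ob ({z \<in> space Ob. \<sigma>z z \<in> A} \<inter> Cz k a0) = (\<integral>\<^sup>+z. indicator ({z \<in> space Ob. \<sigma>z z \<in> A} \<inter> Cz k a0) z \<partial>Ob)"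
    using E by simp
  also have "\<dots> = (\<integral>\<^sup>+u. ennreal (p (fst u)) * indicator ({z \<in> space Ob. \<sigma>z z \<in> A} \<inter> Cz k a0) (u, True)
     + ennreal (1 - p (fst u)) * indicator ({z \<in> space Ob. \<sigma>z z \<in> A} \<inter> Cz k a0) (u, False) \<partial>Q)"
    by (rule O_integral) (use E sets_O in \<open>simp add: measurable_cong_sets[OF sets_O refl, symmetric]\<close>)
  also have "\<dots> = Gk a0 k A"
    unfolding Gk_def
  proof (rule nn_integral_cong)
    fix u assume u: "u \<in> space Q"
    show "ennreal (p (fst u)) * indicator ({z \<in> space Ob. \<sigma>z z \<in> A} \<inter> Cz k a0) (u, True)
     + ennreal (1 - p (fst u)) * indicator ({z \<in> space Ob. \<sigma>z z \<in> A} \<inter> Cz k a0) (u, False)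
     = ennreal (wt a0 u) * indicator (Bk k A) u"
      using u by (cases a0) (auto simp: Cz_def Bk_def wt_def binz_def \<sigma>z_def space_O indicator_def case_prod_beta')
  qed
  finally show ?thesis .
qed

lemma Oeq_C: "emeasure Ob (Cz k a0) = Gk a0 k UNIV"
proof -
  have "{z \<in> space Ob. \<sigma>z z \<in> UNIV} \<inter> Cz k a0 = Cz k a0" unfolding Cz_def by auto
  thus ?thesis using Oeq[of UNIV k a0] by simp
qed

interpretation Ob: prob_space Ob by (rule O_prob)

lemma Pact_prob: assumes "0 < mz k a0" shows "prob_space (Pact k a0)"
proof
  have "emeasure (Pact k a0) (space (Pact k a0)) = (\<integral>\<^sup>+z. ennreal (1 / mz k a0) * indicator (Cz k a0) z \<partial>Ob)"
    unfolding Pact_def by (subst emeasure_density) auto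
  also have "\<dots> = ennreal (1 / mz k a0) * emeasure Ob (Cz k a0)"
    by (rule nn_integral_cmult_indicator) simp
  also have "\<dots> = 1" using assms unfolding mz_def by (simp add: Ob.emeasure_eq_measure ennreal_mult[symmetric])
  finally show "emeasure (Pact k a0) (space (Pact k a0)) = 1" .
qed

lemma Pk_prob: "prob_space (Pk k a0)"
  unfolding Pk_def using Pact_prob O_prob by (cases a0) auto

lemma Pk_sets: "sets (Pk k a0) = sets Ob"
  unfolding Pk_def Pact_def by auto

lemma \<rho>a_prob: "prob_space (\<rho>a a0 k)"
  unfolding \<rho>a_def by (rule prob_space.prob_space_distr[OF Pk_prob]) (simp add: measurable_cong_sets[OF Pk_sets refl])

lemma \<rho>a_sets: "sets (\<rho>a a0 k) = sets borel"
  unfolding \<rho>a_def by simp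

lemma Pact_emeasure:
  assumes A: "A \<in> sets borel"
  shows "emeasure (Pact k a0) (\<sigma>z -` A \<inter> space (Pact k a0)) = ennreal (1 / mz k a0) * Gk a0 k A"
proof -
  have E: "\<sigma>z -` A \<inter> space Ob \<in> sets Ob" by (rule measurable_sets[OF \<sigma>z_meas A])
  have "emeasure (Pact k a0) (\<sigma>z -` A \<inter> space (Pact k a0)) = (\<integral>\<^sup>+z. ennreal (1 / mz k a0) * indicator (Cz k a0) z * indicator (\<sigma>z -` A \<inter> space Ob) z \<partial>Ob)"
    unfolding Pact_def using E by (subst emeasure_density) (auto simp: mult.commute)
  also have "\<dots> = (\<integral>\<^sup>+z. ennreal (1 / mz k a0) * indicator ({z \<in> space Ob. \<sigma>z z \<in> A} \<inter> Cz k a0) z \<partial>Ob)"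
    by (intro nn_integral_cong) (auto simp: indicator_def Cz_def)
  also have "\<dots> = ennreal (1 / mz k a0) * emeasure Ob ({z \<in> space Ob. \<sigma>z z \<in> A} \<inter> Cz k a0)"
  proof (intro nn_integral_cmult_indicator)
    have "{z \<in> space Ob. \<sigma>z z \<in> A} = \<sigma>z -` A \<inter> space Ob" by auto
    thus "{z \<in> space Ob. \<sigma>z z \<in> A} \<inter> Cz k a0 \<in> sets Ob" using E Cz_sets by (metis sets.Int)
  qed
  finally show ?thesis using Oeq[OF A] by simp
qed

lemma Pact_emeasure':
  assumes A: "A \<in> sets borel"
  shows "emeasure (Pact k a0) (\<sigma>z -` A \<inter> space Ob) = ennreal (1 / mz k a0) * Gk a0 k A"
  using Pact_emeasure[OF A] unfolding Pact_def by simp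

lemma Pact_sets: "sets (Pact k a0) = sets Ob" unfolding Pact_def by simp

lemma \<sigma>z_meas_Pact: "\<sigma>z \<in> borel_measurable (Pact k a0)"
  using \<sigma>z_meas by (simp add: measurable_cong_sets[OF Pact_sets refl])

lemma dom:
  assumes A: "A \<in> sets borel"
  shows "ennreal (1 / Rc) * emeasure (\<rho>a True k) A \<le> emeasure (\<rho>a False k) A"
proof (cases "0 < mz k True \<and> 0 < mz k False")
  case False
  hence eq: "\<rho>a True k = \<rho>a False k" unfolding \<rho>a_def Pk_def by auto
  have "ennreal (1 / Rc) \<le> 1" using Rc_ge1 by simp
  hence "ennreal (1 / Rc) * emeasure (\<rho>a False k) A \<le> 1 * emeasure (\<rho>a False k) A"
    by (intro mult_right_mono) auto
  thus ?thesis unfolding eq by simp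
next
  case True
  define aT where "aT = measure Ob ({z \<in> space Ob. \<sigma>z z \<in> A} \<inter> Cz k True)"
  define aF where "aF = measure Ob ({z \<in> space Ob. \<sigma>z z \<in> A} \<inter> Cz k False)"
  define mT where "mT = mz k True"
  define mF where "mF = mz k False"
  have pos: "0 < mT" "0 < mF" using True unfolding mT_def mF_def by auto
  have R: "1 \<le> Rc" by (rule Rc_ge1)
  have GT: "Gk True k A = ennreal aT" "Gk False k A = ennreal aF"
    unfolding aT_def aF_def using Oeq[OF A] by (simp_all add: Ob.emeasure_eq_measure)
  have GU: "Gk True k UNIV = ennreal mT" "Gk False k UNIV = ennreal mF"
    unfolding mT_def mF_def mz_def using Oeq_C by (simp_all add: Ob.emeasure_eq_measure)
  have nn: "0 \<le> aT" "0 \<le> aF" unfolding aT_def aF_def by auto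
  have "ennreal aT * ennreal mF \<le> ennreal Rc * ennreal aF * ennreal mT"
    using key_ineq[OF A, of k] unfolding GT GU .
  hence "ennreal (aT * mF) \<le> ennreal (Rc * aF * mT)"
    using nn pos R by (simp add: ennreal_mult[symmetric])
  hence k: "aT * mF \<le> Rc * aF * mT" using nn pos R by (subst (asm) ennreal_le_iff) auto
  have "(1 / Rc) * ((1 / mT) * aT) \<le> (1 / mF) * aF"
  proof -
    have "(1 / Rc) * ((1 / mT) * aT) = (aT * mF) / (Rc * mT * mF)" using pos R by (simp add: field_simps)
    also have "\<dots> \<le> (Rc * aF * mT) / (Rc * mT * mF)" using k pos R by (intro divide_right_mono) auto
    also have "\<dots> = (1 / mF) * aF" using pos R by (simp add: field_simps)
    finally show ?thesis .
  qed
  hence "ennreal ((1 / Rc) * ((1 / mT) * aT)) \<le> ennreal ((1 / mF) * aF)" by (rule ennreal_leI)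
  moreover have "emeasure (\<rho>a True k) A = ennreal (1 / mT) * ennreal aT"
    unfolding \<rho>a_def Pk_def using True A
    by (subst emeasure_distr) (auto simp: Pact_emeasure GT mT_def \<sigma>z_meas_Pact)
  moreover have "emeasure (\<rho>a False k) A = ennreal (1 / mF) * ennreal aF"
    unfolding \<rho>a_def Pk_def using True A
    by (subst emeasure_distr) (auto simp: Pact_emeasure GT mF_def \<sigma>z_meas_Pact)
  ultimately show ?thesis using pos R nn by (simp add: ennreal_mult[symmetric] mult.assoc)
qed

end


lemma N0_cong: "(\<And>i. i < n \<Longrightarrow> a i = a' i) \<Longrightarrow> N0 n a = N0 n a'"
  unfolding N0_def by (intro arg_cong[where f=card]) auto

lemma Nk_cong: "(\<And>i. i < n \<Longrightarrow> b i = b' i) \<Longrightarrow> Nk n b k = Nk n b' k"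
  unfolding Nk_def by (intro arg_cong[where f=card]) auto

lemma Nk0_cong: "(\<And>i. i < n \<Longrightarrow> b i = b' i) \<Longrightarrow> (\<And>i. i < n \<Longrightarrow> a i = a' i) \<Longrightarrow> Nk0 n b a k = Nk0 n b' a' k"
  unfolding Nk0_def by (intro arg_cong[where f=card]) auto

lemma covF_cong:
  assumes "\<And>i. i < n \<Longrightarrow> b i = b' i" "\<And>i. i < n \<Longrightarrow> a i = a' i" "\<And>i. i < n \<Longrightarrow> S i = S' i"
  shows "covF \<beta> n b a S = covF \<beta> n b' a' S'"
proof -
  have N: "N0 n a = N0 n a'" by (rule N0_cong) (use assms in auto)
  have c: "cw n b a (b l) = cw n b' a' (b' l)" if "l < n" for l
    unfolding cw_def using that assms N Nk_cong[of n b b'] Nk0_cong[of n b b' a a'] by simp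
  have L: "{l\<in>{..<n}. a l} = {l\<in>{..<n}. a' l}" "{j\<in>{..<n}. \<not> a j} = {j\<in>{..<n}. \<not> a' j}" using assms by auto
  have inner: "(\<Sum>l\<in>{l\<in>{..<n}. a l}. if S l < S j then cw n b a (b l) else 0) = (\<Sum>l\<in>{l\<in>{..<n}. a' l}. if S' l < S' j then cw n b' a' (b' l) else 0)" if "j < n" for j
    unfolding L(1) using that assms c by (intro sum.cong) auto
  show ?thesis unfolding covF_def N L(2)
    using inner by (intro if_cong refl arg_cong2[where f="(/)"] sum.cong) auto
qed

lemma covF_bounds: "0 \<le> covF \<beta> n b a S" "covF \<beta> n b a S \<le> 1"
proof -
  have "(\<Sum>j\<in>{j\<in>{..<n}. \<not> a j}. (if (\<Sum>l\<in>{l\<in>{..<n}. a l}. (if S l < S j then cw n b a (b l) else 0)) < \<beta> then 1 else 0::real))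
     \<le> (\<Sum>j\<in>{j\<in>{..<n}. \<not> a j}. 1)" by (intro sum_mono) auto
  also have "\<dots> = real (N0 n a)" unfolding N0_def by simp
  finally show "covF \<beta> n b a S \<le> 1" unfolding covF_def by (auto simp: divide_le_eq)
  show "0 \<le> covF \<beta> n b a S" unfolding covF_def by (auto intro!: sum_nonneg divide_nonneg_nonneg)
qed

lemma covF_meas:
  assumes "\<And>i. sets (M i) = sets borel"
  shows "covF \<beta> n b a \<in> borel_measurable (PiM {..<n} M)"
proof -
  note comp = comp_meas[OF assms]
  have "(\<lambda>S. (\<Sum>j\<in>{j\<in>{..<n}. \<not> a j}. (if (\<Sum>l\<in>{l\<in>{..<n}. a l}. (if S l < S j then cw n b a (b l) else 0)) < \<beta> then 1 else 0::real)))
     \<in> borel_measurable (PiM {..<n} M)"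
  proof (intro borel_measurable_sum)
    fix j assume j: "j \<in> {j\<in>{..<n}. \<not> a j}"
    have [measurable]: "(\<lambda>S. \<Sum>l\<in>{l\<in>{..<n}. a l}. (if S l < S j then cw n b a (b l) else 0)) \<in> borel_measurable (PiM {..<n} M)"
      using j by (intro borel_measurable_sum if_less_meas comp) auto
    show "(\<lambda>S. if (\<Sum>l\<in>{l\<in>{..<n}. a l}. (if S l < S j then cw n b a (b l) else 0)) < \<beta> then 1 else 0::real) \<in> borel_measurable (PiM {..<n} M)"
      by measurable
  qed
  hence "(\<lambda>S. (\<Sum>j\<in>{j\<in>{..<n}. \<not> a j}. (if (\<Sum>l\<in>{l\<in>{..<n}. a l}. (if S l < S j then cw n b a (b l) else 0)) < \<beta> then 1 else 0::real)) / real (N0 n a))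
     \<in> borel_measurable (PiM {..<n} M)" by measurable
  thus ?thesis unfolding covF_def by (cases "N0 n a = 0") (auto simp: fun_eq_iff)
qed

lemma indicator_PiE_prod:
  assumes "\<omega> \<in> extensional I" and finI: "finite I"
  shows "indicator (PiE I A) \<omega> = (\<Prod>i\<in>I. indicator (A i) (\<omega> i) :: ennreal)"
proof (cases "\<forall>i\<in>I. \<omega> i \<in> A i")
  case True
  hence "\<omega> \<in> PiE I A" using assms by (auto simp: PiE_def)
  thus ?thesis using True by simp
next
  case False
  then obtain i where i: "i \<in> I" "\<omega> i \<notin> A i" by auto
  hence "\<omega> \<notin> PiE I A" by auto
  moreover have "(\<Prod>i\<in>I. indicator (A i) (\<omega> i) :: ennreal) = 0"
    using i finI by (intro prod_zero[OF finI] bexI[where x=i]) auto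
  ultimately show ?thesis by simp
qed

lemma PiM_density:
  fixes M :: "'a measure"
  assumes fin: "finite I" and Mp: "prob_space M" and f: "\<And>i. f i \<in> borel_measurable M"
    and Np: "\<And>i. prob_space (density M (f i))"
  shows "PiM I (\<lambda>i. density M (f i)) = density (PiM I (\<lambda>_. M)) (\<lambda>\<omega>. \<Prod>i\<in>I. f i (\<omega> i))"
proof -
  interpret N: product_sigma_finite "\<lambda>i. density M (f i)"
    unfolding product_sigma_finite_def using Np by (simp add: prob_space_imp_sigma_finite)
  interpret MM: product_sigma_finite "\<lambda>_. M"
    unfolding product_sigma_finite_def using Mp by (simp add: prob_space_imp_sigma_finite)
  have gm: "(\<lambda>\<omega>. \<Prod>i\<in>I. f i (\<omega> i)) \<in> borel_measurable (PiM I (\<lambda>_. M))"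
  proof (intro borel_measurable_prod_ennreal)
    fix i assume "i \<in> I"
    thus "(\<lambda>\<omega>. f i (\<omega> i)) \<in> borel_measurable (PiM I (\<lambda>_. M))"
      using measurable_comp[OF measurable_component_singleton[of i I "\<lambda>_. M"] f[of i]] by (simp add: comp_def)
  qed
  show ?thesis
  proof (rule N.PiM_eqI[symmetric, OF fin])
    show "sets (density (PiM I (\<lambda>_. M)) (\<lambda>\<omega>. \<Prod>i\<in>I. f i (\<omega> i))) = sets (PiM I (\<lambda>i. density M (f i)))"
      by (simp add: sets_PiM_cong[OF refl, of _ "\<lambda>_. M" "\<lambda>i. density M (f i)"])
  next
    fix A assume A: "\<And>i. i \<in> I \<Longrightarrow> A i \<in> sets (density M (f i))"
    hence A': "\<And>i. i \<in> I \<Longrightarrow> A i \<in> sets M" by simp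
    have PA: "PiE I A \<in> sets (PiM I (\<lambda>_. M))" using A' by (rule sets_PiM_I_finite[OF fin])
    have "emeasure (density (PiM I (\<lambda>_. M)) (\<lambda>\<omega>. \<Prod>i\<in>I. f i (\<omega> i))) (PiE I A)
        = (\<integral>\<^sup>+\<omega>. (\<Prod>i\<in>I. f i (\<omega> i)) * indicator (PiE I A) \<omega> \<partial>PiM I (\<lambda>_. M))"
      by (rule emeasure_density[OF gm PA])
    also have "\<dots> = (\<integral>\<^sup>+\<omega>. (\<Prod>i\<in>I. f i (\<omega> i) * indicator (A i) (\<omega> i)) \<partial>PiM I (\<lambda>_. M))"
    proof (rule nn_integral_cong)
      fix \<omega> assume "\<omega> \<in> space (PiM I (\<lambda>_. M))"
      hence "\<omega> \<in> extensional I" by (simp add: space_PiM PiE_def)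
      thus "(\<Prod>i\<in>I. f i (\<omega> i)) * indicator (PiE I A) \<omega> = (\<Prod>i\<in>I. f i (\<omega> i) * indicator (A i) (\<omega> i))"
        by (simp add: indicator_PiE_prod[OF _ fin] prod.distrib)
    qed
    also have "\<dots> = (\<Prod>i\<in>I. \<integral>\<^sup>+x. f i x * indicator (A i) x \<partial>M)"
      by (rule MM.product_nn_integral_prod[OF fin]) (use A' f in measurable)
    also have "\<dots> = (\<Prod>i\<in>I. emeasure (density M (f i)) (A i))"
      by (intro prod.cong refl emeasure_density[symmetric] f A') 
    finally show "emeasure (density (PiM I (\<lambda>_. M)) (\<lambda>\<omega>. \<Prod>i\<in>I. f i (\<omega> i))) (PiE I A) = (\<Prod>i\<in>I. emeasure (density M (f i)) (A i))" .
  qed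
qed


context setting
begin

interpretation Ob: prob_space Ob by (rule O_prob)

lemma atom_bound:
  fixes n :: nat and b :: "nat \<Rightarrow> int" and a :: "nat \<Rightarrow> bool"
  defines "\<Omega> \<equiv> mar_data n Q p"
  defines "At \<equiv> {\<omega> \<in> space \<Omega>. \<forall>i<n. binz (\<omega> i) = b i \<and> snd (\<omega> i) = a i}"
  shows "ennreal ((1 / Rc) * (1 - \<alpha>)) * emeasure \<Omega> At
     \<le> (\<integral>\<^sup>+\<omega>. ennreal (pro_coverage \<alpha> \<epsilon> ph s n \<omega>) * indicator At \<omega> \<partial>\<Omega>)"
proof -
  define \<beta> where "\<beta> = 1 - \<alpha>"
  have \<beta>: "0 < \<beta>" "\<beta> \<le> 1" unfolding \<beta>_def using \<alpha> by auto
  have R: "1 \<le> Rc" by (rule Rc_ge1)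
  interpret PS: product_sigma_finite "\<lambda>_. Ob"
    unfolding product_sigma_finite_def by (simp add: prob_space_imp_sigma_finite O_prob)
  have \<Omega>def: "\<Omega> = PiM {..<n} (\<lambda>_. Ob)" unfolding \<Omega>_def mar_data_def ..
  interpret \<Omega>p: prob_space \<Omega> unfolding \<Omega>def by (intro prob_space_PiM O_prob)
  define C where "C = (\<lambda>i. Cz (b i) (a i))"
  define m where "m = (\<lambda>i. mz (b i) (a i))"
  have Csub: "C i \<subseteq> space Ob" for i unfolding C_def Cz_def by auto
  have AtE: "At = PiE {..<n} C"
    unfolding At_def \<Omega>def space_PiM C_def Cz_def by (auto simp: PiE_def Pi_def)
  have AtS: "At \<in> sets \<Omega>" unfolding AtE \<Omega>def by (rule sets_PiM_I_finite) (auto simp: C_def)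
  have m_nn: "0 \<le> m i" for i unfolding m_def mz_def by simp
  have emAt: "emeasure \<Omega> At = ennreal (\<Prod>i<n. m i)"
  proof -
    have "emeasure \<Omega> At = (\<Prod>i<n. emeasure Ob (C i))"
      unfolding AtE \<Omega>def by (rule PS.emeasure_PiM) (auto simp: C_def)
    also have "\<dots> = (\<Prod>i<n. ennreal (m i))"
      unfolding C_def m_def mz_def by (simp add: Ob.emeasure_eq_measure)
    also have "\<dots> = ennreal (\<Prod>i<n. m i)" by (rule prod_ennreal) (simp add: m_nn)
    finally show ?thesis .
  qed
  have covAt: "pro_coverage \<alpha> \<epsilon> ph s n \<omega> = covF \<beta> n b a (\<lambda>i. \<sigma>z (\<omega> i))" if "\<omega> \<in> At" for \<omega>
  proof -
    have "pro_coverage \<alpha> \<epsilon> ph s n \<omega> = covF (1 - \<alpha>) n (\<lambda>i. bin \<epsilon> ph (obsX \<omega> i)) (obsA \<omega>) (\<lambda>i. s (obsX \<omega> i) (obsY \<omega> i))"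
      by (rule cov_eq[OF \<alpha>(2)])
    also have "\<dots> = covF \<beta> n b a (\<lambda>i. \<sigma>z (\<omega> i))"
      unfolding \<beta>_def using that
      by (intro covF_cong) (auto simp: At_def binz_def obsX_def obsA_def obsY_def \<sigma>z_def)
    finally show ?thesis .
  qed
  show ?thesis
  proof (cases "N0 n a = 0 \<or> (\<exists>i<n. m i = 0)")
    case True
    show ?thesis
    proof (cases "N0 n a = 0")
      case N: True
      have "(\<integral>\<^sup>+\<omega>. ennreal (pro_coverage \<alpha> \<epsilon> ph s n \<omega>) * indicator At \<omega> \<partial>\<Omega>) = (\<integral>\<^sup>+\<omega>. indicator At \<omega> \<partial>\<Omega>)"
        by (intro nn_integral_cong) (auto simp: covAt covF_def N indicator_def)
      also have "\<dots> = emeasure \<Omega> At" using AtS by simp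
      finally have eq: "(\<integral>\<^sup>+\<omega>. ennreal (pro_coverage \<alpha> \<epsilon> ph s n \<omega>) * indicator At \<omega> \<partial>\<Omega>) = emeasure \<Omega> At" .
      have "(1 / Rc) * (1 - \<alpha>) \<le> 1"
        using R \<alpha> by (simp add: field_simps)
      hence "ennreal ((1 / Rc) * (1 - \<alpha>)) \<le> 1"
        using ennreal_leI by fastforce
      hence "ennreal ((1 / Rc) * (1 - \<alpha>)) * emeasure \<Omega> At \<le> 1 * emeasure \<Omega> At"
        by (intro mult_right_mono) auto
      thus ?thesis unfolding eq by simp
    next
      case False
      with True obtain i where "i < n" "m i = 0" by auto
      hence z: "(\<Prod>i<n. m i) = 0" by (intro prod_zero) auto
      have "emeasure \<Omega> At = 0" unfolding emAt z by simp
      thus ?thesis by simp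
    qed
  next
    case False
    hence N0: "0 < N0 n a" by simp
    have mpos: "0 < m i" if "i < n" for i
    proof -
      have "m i \<noteq> 0" using False that by blast
      thus ?thesis using m_nn[of i] by linarith
    qed
    define fi where "fi = (\<lambda>i. if i < n then (\<lambda>z. ennreal (1 / m i) * indicator (C i) z) else (\<lambda>_. 1))"
    have fim: "fi i \<in> borel_measurable Ob" for i unfolding fi_def C_def by (cases "i < n") auto
    have dens: "density Ob (fi i) = Pk (b i) (a i)" if "i < n" for i
    proof -
      have "0 < mz (b i) (a i)" using mpos[OF that] unfolding m_def .
      hence "Pk (b i) (a i) = Pact (b i) (a i)" unfolding Pk_def by (cases "a i") auto
      thus ?thesis unfolding fi_def Pact_def m_def C_def using that by simp
    qed
    have densp: "prob_space (density Ob (fi i))" for i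
    proof (cases "i < n")
      case True thus ?thesis using dens Pk_prob by simp
    next
      case False thus ?thesis unfolding fi_def using O_prob by (simp add: density_1)
    qed
    have PD: "PiM {..<n} (\<lambda>i. density Ob (fi i)) = density \<Omega> (\<lambda>\<omega>. \<Prod>i<n. fi i (\<omega> i))"
      unfolding \<Omega>def by (rule PiM_density[OF _ O_prob fim densp]) simp
    have PK: "PiM {..<n} (\<lambda>i. density Ob (fi i)) = PiM {..<n} (\<lambda>i. Pk (b i) (a i))"
      using dens by (intro PiM_cong) auto
    define \<rho> where "\<rho> = (\<lambda>i. if a i then \<rho>a True (b i) else \<rho>a False (b i))"
    have \<rho>_eq: "\<rho> i = \<rho>a (a i) (b i)" for i unfolding \<rho>_def by simp
    have \<rho>p: "prob_space (\<rho> i)" for i unfolding \<rho>_eq by (rule \<rho>a_prob)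
    have \<rho>s: "sets (\<rho> i) = sets borel" for i unfolding \<rho>_eq by (rule \<rho>a_sets)
    have covFm: "covF \<beta> n b a \<in> borel_measurable (PiM {..<n} \<rho>)" by (rule covF_meas[OF \<rho>s])
    have core': "(1 / Rc) * \<beta> \<le> (\<integral>S. covF \<beta> n b a S \<partial>PiM {..<n} \<rho>)"
      unfolding \<rho>_def
    proof (rule core[where \<rho>F="\<rho>a False" and \<rho>T="\<rho>a True"])
      show "\<And>k A. A \<in> sets borel \<Longrightarrow> ennreal (1 / Rc) * emeasure (\<rho>a True k) A \<le> emeasure (\<rho>a False k) A"
        by (rule dom)
    qed (use \<rho>a_prob \<rho>a_sets R \<beta> N0 in simp_all)
    interpret Pp: prob_space "PiM {..<n} \<rho>" by (intro prob_space_PiM \<rho>p)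
    have int_eq: "(\<integral>\<^sup>+S. ennreal (covF \<beta> n b a S) \<partial>PiM {..<n} \<rho>) = ennreal (\<integral>S. covF \<beta> n b a S \<partial>PiM {..<n} \<rho>)"
    proof (rule nn_integral_eq_integral)
      show "integrable (PiM {..<n} \<rho>) (covF \<beta> n b a)"
        by (rule Pp.integrable_const_bound[where B=1]) (use covF_bounds covFm in auto)
    qed (use covF_bounds in auto)
    have distrPi: "distr (PiM {..<n} (\<lambda>i. Pk (b i) (a i))) (PiM {..<n} \<rho>) (compose {..<n} \<sigma>z) = PiM {..<n} \<rho>"
    proof -
      have "distr (PiM {..<n} (\<lambda>i. Pk (b i) (a i))) (PiM {..<n} \<rho>) (compose {..<n} \<sigma>z)
          = PiM {..<n} (\<lambda>i. distr (Pk (b i) (a i)) (\<rho> i) \<sigma>z)"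
      proof (rule distr_PiM_finite_prob_space')
        fix i
        show "\<sigma>z \<in> measurable (Pk (b i) (a i)) (\<rho> i)"
          using \<sigma>z_meas measurable_cong_sets[OF Pk_sets \<rho>s, of "b i" "a i" i] by blast
      qed (simp_all add: Pk_prob \<rho>p)
      also have "\<dots> = PiM {..<n} \<rho>"
      proof (intro PiM_cong refl)
        fix i
        have "distr (Pk (b i) (a i)) (\<rho> i) \<sigma>z = distr (Pk (b i) (a i)) borel \<sigma>z"
          by (rule distr_cong) (simp_all add: \<rho>s)
        thus "distr (Pk (b i) (a i)) (\<rho> i) \<sigma>z = \<rho> i" unfolding \<rho>_eq \<rho>a_def by simp
      qed
      finally show ?thesis .
    qed
    have compm: "compose {..<n} \<sigma>z \<in> measurable (PiM {..<n} (\<lambda>i. Pk (b i) (a i))) (PiM {..<n} \<rho>)"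
      unfolding compose_def
    proof (intro measurable_restrict)
      fix i assume "i \<in> {..<n}"
      hence A: "(\<lambda>x. x i) \<in> measurable (PiM {..<n} (\<lambda>i. Pk (b i) (a i))) (Pk (b i) (a i))"
        by (rule measurable_component_singleton)
      have B: "\<sigma>z \<in> measurable (Pk (b i) (a i)) (\<rho> i)"
        using \<sigma>z_meas measurable_cong_sets[OF Pk_sets \<rho>s, of "b i" "a i" i] by blast
      show "(\<lambda>x. \<sigma>z (x i)) \<in> measurable (PiM {..<n} (\<lambda>i. Pk (b i) (a i))) (\<rho> i)"
        using measurable_comp[OF A B] by (simp add: comp_def)
    qed
    define F where "F = (\<lambda>\<omega>::nat \<Rightarrow> (('x \<times> 'y) \<times> bool). ennreal (covF \<beta> n b a (\<lambda>i. \<sigma>z (\<omega> i))))"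
    have Fc: "F \<omega> = ennreal (covF \<beta> n b a (compose {..<n} \<sigma>z \<omega>))" for \<omega>
      unfolding F_def compose_def by (intro arg_cong[where f=ennreal] covF_cong) auto
    have Fm: "F \<in> borel_measurable \<Omega>"
    proof -
      have "(\<lambda>\<omega>. compose {..<n} \<sigma>z \<omega>) \<in> measurable \<Omega> (PiM {..<n} \<rho>)"
        using compm unfolding \<Omega>def by (simp add: measurable_cong_sets[OF sets_PiM_cong[OF refl Pk_sets] refl])
      hence "(\<lambda>\<omega>. covF \<beta> n b a (compose {..<n} \<sigma>z \<omega>)) \<in> borel_measurable \<Omega>"
        using measurable_comp[OF _ covFm] by (simp add: comp_def)
      thus ?thesis unfolding Fc by measurable
    qed
    have step_d: "(\<integral>\<^sup>+\<omega>. F \<omega> \<partial>PiM {..<n} (\<lambda>i. Pk (b i) (a i))) = ennreal (\<integral>S. covF \<beta> n b a S \<partial>PiM {..<n} \<rho>)"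
    proof -
      have "(\<integral>\<^sup>+S. ennreal (covF \<beta> n b a S) \<partial>PiM {..<n} \<rho>)
          = (\<integral>\<^sup>+S. ennreal (covF \<beta> n b a S) \<partial>distr (PiM {..<n} (\<lambda>i. Pk (b i) (a i))) (PiM {..<n} \<rho>) (compose {..<n} \<sigma>z))"
        unfolding distrPi ..
      also have "\<dots> = (\<integral>\<^sup>+\<omega>. ennreal (covF \<beta> n b a (compose {..<n} \<sigma>z \<omega>)) \<partial>PiM {..<n} (\<lambda>i. Pk (b i) (a i)))"
        by (rule nn_integral_distr[OF compm]) (use covFm in measurable)
      finally show ?thesis unfolding Fc int_eq by simp
    qed
    have prodm: "(\<lambda>\<omega>. \<Prod>i<n. fi i (\<omega> i)) \<in> borel_measurable \<Omega>"
    proof (intro borel_measurable_prod_ennreal)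
      fix i assume "i \<in> {..<n}"
      thus "(\<lambda>\<omega>. fi i (\<omega> i)) \<in> borel_measurable \<Omega>"
        unfolding \<Omega>def using measurable_comp[OF measurable_component_singleton[of i "{..<n}" "\<lambda>_. Ob"] fim[of i]]
        by (simp add: comp_def)
    qed
    have step_b: "ennreal (\<Prod>i<n. m i) * (\<integral>\<^sup>+\<omega>. F \<omega> \<partial>PiM {..<n} (\<lambda>i. Pk (b i) (a i)))
        = (\<integral>\<^sup>+\<omega>. F \<omega> * indicator At \<omega> \<partial>\<Omega>)"
    proof -
      have "(\<integral>\<^sup>+\<omega>. F \<omega> \<partial>PiM {..<n} (\<lambda>i. Pk (b i) (a i))) = (\<integral>\<^sup>+\<omega>. (\<Prod>i<n. fi i (\<omega> i)) * F \<omega> \<partial>\<Omega>)"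
        unfolding PK[symmetric] PD by (rule nn_integral_density[OF prodm Fm])
      hence "ennreal (\<Prod>i<n. m i) * (\<integral>\<^sup>+\<omega>. F \<omega> \<partial>PiM {..<n} (\<lambda>i. Pk (b i) (a i)))
         = (\<integral>\<^sup>+\<omega>. ennreal (\<Prod>i<n. m i) * ((\<Prod>i<n. fi i (\<omega> i)) * F \<omega>) \<partial>\<Omega>)"
        using prodm Fm by (simp add: nn_integral_cmult)
      also have "\<dots> = (\<integral>\<^sup>+\<omega>. F \<omega> * indicator At \<omega> \<partial>\<Omega>)"
      proof (rule nn_integral_cong)
        fix \<omega> assume \<omega>: "\<omega> \<in> space \<Omega>"
        hence ext: "\<omega> \<in> extensional {..<n}" unfolding \<Omega>def by (simp add: space_PiM PiE_def)
        have "(\<Prod>i<n. fi i (\<omega> i)) = (\<Prod>i<n. ennreal (1 / m i)) * (\<Prod>i<n. indicator (C i) (\<omega> i))"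
          unfolding fi_def by (simp add: prod.distrib)
        also have "(\<Prod>i<n. ennreal (1 / m i)) = ennreal (\<Prod>i<n. 1 / m i)" by (rule prod_ennreal) (simp add: m_nn)
        also have "(\<Prod>i<n. indicator (C i) (\<omega> i) :: ennreal) = indicator At \<omega>"
          unfolding AtE by (rule indicator_PiE_prod[OF ext, symmetric]) simp
        finally have eq1: "(\<Prod>i<n. fi i (\<omega> i)) = ennreal (\<Prod>i<n. 1 / m i) * indicator At \<omega>" .
        have eq2: "ennreal (\<Prod>i<n. m i) * ennreal (\<Prod>i<n. 1 / m i) = ennreal ((\<Prod>i<n. m i) * (\<Prod>i<n. 1 / m i))"
          by (rule ennreal_mult[symmetric]) (auto intro!: prod_nonneg simp: m_nn)
        have "ennreal (\<Prod>i<n. m i) * (\<Prod>i<n. fi i (\<omega> i)) = ennreal ((\<Prod>i<n. m i) * (\<Prod>i<n. 1 / m i)) * indicator At \<omega>"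
          unfolding eq1 mult.assoc[symmetric] eq2 ..
        also have "(\<Prod>i<n. m i) * (\<Prod>i<n. 1 / m i) = 1"
        proof -
          have "(\<Prod>i<n. m i) * (\<Prod>i<n. 1 / m i) = (\<Prod>i<n. m i * (1 / m i))" by (rule prod.distrib[symmetric])
          also have "\<dots> = (\<Prod>i<n. 1)" using mpos by (intro prod.cong) (auto simp: less_le)
          finally show ?thesis by simp
        qed
        finally have e: "ennreal (\<Prod>i<n. m i) * (\<Prod>i<n. fi i (\<omega> i)) = indicator At \<omega>" by simp
        show "ennreal (\<Prod>i<n. m i) * ((\<Prod>i<n. fi i (\<omega> i)) * F \<omega>) = F \<omega> * indicator At \<omega>"
          unfolding mult.assoc[symmetric] e by (rule mult.commute)
      qed
      finally show ?thesis .
    qed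
    have step_a: "(\<integral>\<^sup>+\<omega>. ennreal (pro_coverage \<alpha> \<epsilon> ph s n \<omega>) * indicator At \<omega> \<partial>\<Omega>) = (\<integral>\<^sup>+\<omega>. F \<omega> * indicator At \<omega> \<partial>\<Omega>)"
      by (intro nn_integral_cong) (auto simp: F_def covAt indicator_def)
    have "ennreal ((1 / Rc) * (1 - \<alpha>)) * emeasure \<Omega> At = ennreal (\<Prod>i<n. m i) * ennreal ((1 / Rc) * \<beta>)"
      unfolding emAt \<beta>_def by (simp add: mult.commute)
    also have "\<dots> \<le> ennreal (\<Prod>i<n. m i) * ennreal (\<integral>S. covF \<beta> n b a S \<partial>PiM {..<n} \<rho>)"
      using core' by (intro mult_left_mono ennreal_leI) auto
    also have "\<dots> = (\<integral>\<^sup>+\<omega>. ennreal (pro_coverage \<alpha> \<epsilon> ph s n \<omega>) * indicator At \<omega> \<partial>\<Omega>)"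
      unfolding step_a step_b[symmetric] step_d ..
    finally show ?thesis .
  qed
qed

end


lemma cond_exp_lb:
  fixes f :: "'a \<Rightarrow> real"
  assumes P: "prob_space M" and sub: "subalgebra M F" and f: "integrable M f"
    and H: "\<And>A. A \<in> sets F \<Longrightarrow> c * measure M A \<le> (\<integral>x\<in>A. f x \<partial>M)"
  shows "AE x in M. c \<le> real_cond_exp M F f x"
proof -
  interpret prob_space M by (rule P)
  interpret finite_measure_subalgebra M F by unfold_locales (rule sub)
  let ?h = "real_cond_exp M F f"
  define E where "E = {x \<in> space M. ?h x < c}"
  have spF: "space F = space M" using sub unfolding subalgebra_def by simp
  have EF: "E \<in> sets F"
  proof -
    have "{x \<in> space F. ?h x < c} \<in> sets F" by measurable
    thus ?thesis unfolding E_def spF .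
  qed
  have EM: "E \<in> sets M" using EF sub unfolding subalgebra_def by auto
  have hint: "integrable M ?h" by (rule real_cond_exp_int(1)[OF f])
  have eq: "(\<integral>x\<in>E. f x \<partial>M) = (\<integral>x\<in>E. ?h x \<partial>M)" by (rule real_cond_exp_intA[OF f EF])
  define u where "u = (\<lambda>x. (c - ?h x) * indicator E x)"
  have uint: "integrable M u" unfolding u_def
    using hint EM by (intro integrable_real_mult_indicator) auto
  have unn: "0 \<le> u x" for x unfolding u_def E_def by (auto simp: indicator_def)
  have "integral\<^sup>L M u = c * measure M E - (\<integral>x\<in>E. ?h x \<partial>M)"
  proof -
    have "integral\<^sup>L M u = (\<integral>x. c * indicator E x - ?h x * indicator E x \<partial>M)"
      unfolding u_def by (simp add: algebra_simps)
    also have "\<dots> = (\<integral>x. c * indicator E x \<partial>M) - (\<integral>x. ?h x * indicator E x \<partial>M)"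
      using hint EM by (intro Bochner_Integration.integral_diff) (auto intro!: integrable_real_mult_indicator integrable_real_indicator simp: less_top[symmetric])
    also have "\<dots> = c * measure M E - (\<integral>x\<in>E. ?h x \<partial>M)"
      using EM by (simp add: set_lebesgue_integral_def mult.commute)
    finally show ?thesis .
  qed
  also have "\<dots> \<le> 0" using H[OF EF] eq by simp
  finally have "integral\<^sup>L M u \<le> 0" .
  moreover have "0 \<le> integral\<^sup>L M u" using unn by simp
  ultimately have "integral\<^sup>L M u = 0" by simp
  hence "AE x in M. u x = 0" using integral_nonneg_eq_0_iff_AE[OF uint] unn by simp
  thus ?thesis
  proof (rule AE_mp, intro AE_I2 impI)
    fix x assume x: "x \<in> space M" "u x = 0"
    show "c \<le> ?h x"
    proof (rule ccontr)
      assume "\<not> c \<le> ?h x"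
      hence "x \<in> E" "c - ?h x > 0" using x unfolding E_def by auto
      hence "u x > 0" unfolding u_def by simp
      with x show False by simp
    qed
  qed
qed


context setting
begin

interpretation Ob: prob_space Ob by (rule O_prob)

definition "gfun (n::nat) \<omega> = restrict (\<lambda>i. (bin \<epsilon> ph (obsX \<omega> i), obsA \<omega> i)) {..<n}"
definition "Vs (n::nat) = PiE {..<n} (\<lambda>_. UNIV :: (int \<times> bool) set)"
definition "Atv (n::nat) v = {\<omega> \<in> space (mar_data n Q p). \<forall>i<n. binz (\<omega> i) = fst (v i) \<and> snd (\<omega> i) = snd (v i)}"

lemma Vs_countable: "countable (Vs n)"
  unfolding Vs_def by (rule countable_PiE) simp_all

lemma gfun_V: "gfun n \<omega> \<in> Vs n" unfolding gfun_def Vs_def by auto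

lemma Atv_sets: "Atv n v \<in> sets (mar_data n Q p)"
proof -
  have "Atv n v = PiE {..<n} (\<lambda>i. Cz (fst (v i)) (snd (v i)))"
    unfolding Atv_def mar_data_def space_PiM Cz_def by (auto simp: PiE_def Pi_def)
  also have "\<dots> \<in> sets (mar_data n Q p)" unfolding mar_data_def by (rule sets_PiM_I_finite) auto
  finally show ?thesis .
qed

lemma gfun_pre: "v \<in> Vs n \<Longrightarrow> gfun n -` {v} \<inter> space (mar_data n Q p) = Atv n v"
  unfolding gfun_def Atv_def Vs_def
  by (auto simp: binz_def obsX_def obsA_def fun_eq_iff restrict_def PiE_def extensional_def split: if_splits)

lemma gfun_meas: "gfun n \<in> measurable (mar_data n Q p) (count_space UNIV)"
proof -
  have 1: "gfun n \<in> measurable (mar_data n Q p) (count_space (Vs n))"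
    by (subst measurable_count_space_eq_countable[OF Vs_countable]) (auto simp: gfun_V gfun_pre Atv_sets)
  show ?thesis unfolding measurable_def
  proof (safe)
    fix A :: "(nat \<Rightarrow> int \<times> bool) set"
    have "gfun n -` A \<inter> space (mar_data n Q p) = gfun n -` (A \<inter> Vs n) \<inter> space (mar_data n Q p)"
      using gfun_V by auto
    also have "\<dots> \<in> sets (mar_data n Q p)" by (rule measurable_sets[OF 1]) auto
    finally show "gfun n -` A \<inter> space (mar_data n Q p) \<in> sets (mar_data n Q p)" .
  qed auto
qed

lemma BA_eq: "BA_algebra \<epsilon> ph n (mar_data n Q p) = vimage_algebra (space (mar_data n Q p)) (gfun n) (count_space UNIV)"
  unfolding BA_algebra_def gfun_def ..

lemma BA_sub: "subalgebra (mar_data n Q p) (BA_algebra \<epsilon> ph n (mar_data n Q p))"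
  unfolding subalgebra_def BA_eq
proof
  show "space (vimage_algebra (space (mar_data n Q p)) (gfun n) (count_space UNIV)) = space (mar_data n Q p)" by simp
  show "sets (vimage_algebra (space (mar_data n Q p)) (gfun n) (count_space UNIV)) \<subseteq> sets (mar_data n Q p)"
    using gfun_meas by (subst sets_vimage_algebra2) (auto simp: measurable_def)
qed

lemma cov_meas: "pro_coverage \<alpha> \<epsilon> ph s n \<in> borel_measurable (mar_data n Q p)"
proof -
  let ?\<Omega> = "mar_data n Q p"
  have each: "(\<lambda>\<omega>. covF (1 - \<alpha>) n (\<lambda>i. fst (v i)) (\<lambda>i. snd (v i)) (\<lambda>i. \<sigma>z (\<omega> i))) \<in> borel_measurable ?\<Omega>" for v :: "nat \<Rightarrow> int \<times> bool"
  proof -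
    have r: "(\<lambda>\<omega>. restrict (\<lambda>i. \<sigma>z (\<omega> i)) {..<n}) \<in> measurable ?\<Omega> (PiM {..<n} (\<lambda>_. borel))"
      unfolding mar_data_def
    proof (intro measurable_restrict)
      fix i assume "i \<in> {..<n}"
      hence A: "(\<lambda>x. x i) \<in> measurable (PiM {..<n} (\<lambda>_. Ob)) Ob" by (rule measurable_component_singleton)
      show "(\<lambda>x. \<sigma>z (x i)) \<in> borel_measurable (PiM {..<n} (\<lambda>_. Ob))"
        using measurable_comp[OF A \<sigma>z_meas] by (simp add: comp_def)
    qed
    have m: "(\<lambda>\<omega>. covF (1 - \<alpha>) n (\<lambda>i. fst (v i)) (\<lambda>i. snd (v i)) (restrict (\<lambda>i. \<sigma>z (\<omega> i)) {..<n})) \<in> borel_measurable ?\<Omega>"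
      using measurable_comp[OF r covF_meas[of "\<lambda>_. borel"]] by (simp add: comp_def)
    have e: "covF (1 - \<alpha>) n (\<lambda>i. fst (v i)) (\<lambda>i. snd (v i)) (restrict (\<lambda>i. \<sigma>z (\<omega> i)) {..<n})
        = covF (1 - \<alpha>) n (\<lambda>i. fst (v i)) (\<lambda>i. snd (v i)) (\<lambda>i. \<sigma>z (\<omega> i))" for \<omega>
      by (intro covF_cong) auto
    show ?thesis using m unfolding e .
  qed
  have "(\<lambda>\<omega>. (\<lambda>v \<omega>. covF (1 - \<alpha>) n (\<lambda>i. fst (v i)) (\<lambda>i. snd (v i)) (\<lambda>i. \<sigma>z (\<omega> i))) (gfun n \<omega>) \<omega>) \<in> borel_measurable ?\<Omega>"
  proof (rule measurable_compose_countable'[OF each _ Vs_countable])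
    show "gfun n \<in> measurable ?\<Omega> (count_space (Vs n))"
      by (subst measurable_count_space_eq_countable[OF Vs_countable]) (auto simp: gfun_V gfun_pre Atv_sets)
  qed
  moreover have "pro_coverage \<alpha> \<epsilon> ph s n = (\<lambda>\<omega>. covF (1 - \<alpha>) n (\<lambda>i. fst (gfun n \<omega> i)) (\<lambda>i. snd (gfun n \<omega> i)) (\<lambda>i. \<sigma>z (\<omega> i)))"
    unfolding cov_eq[OF \<alpha>(2)]
    by (intro ext covF_cong) (auto simp: gfun_def \<sigma>z_def obsX_def obsY_def)
  ultimately show ?thesis by simp
qed

lemma F_bound:
  assumes A: "A \<in> sets (BA_algebra \<epsilon> ph n (mar_data n Q p))"
  shows "(1 / Rc) * (1 - \<alpha>) * measure (mar_data n Q p) A \<le> (\<integral>\<omega>\<in>A. pro_coverage \<alpha> \<epsilon> ph s n \<omega> \<partial>mar_data n Q p)"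
proof -
  let ?\<Omega> = "mar_data n Q p"
  let ?f = "pro_coverage \<alpha> \<epsilon> ph s n"
  define c0 where "c0 = (1 / Rc) * (1 - \<alpha>)"
  have c0: "0 \<le> c0" unfolding c0_def using Rc_ge1 \<alpha> by simp
  interpret \<Omega>p: prob_space ?\<Omega> unfolding mar_data_def by (intro prob_space_PiM O_prob)
  have fb: "0 \<le> ?f \<omega>" "?f \<omega> \<le> 1" for \<omega> unfolding cov_eq[OF \<alpha>(2)] by (rule covF_bounds)+
  have fm: "?f \<in> borel_measurable ?\<Omega>" by (rule cov_meas)
  have fme: "(\<lambda>\<omega>. ennreal (?f \<omega>)) \<in> borel_measurable ?\<Omega>" using fm by measurable
  obtain B where B: "A = gfun n -` B \<inter> space ?\<Omega>"
    using A unfolding BA_eq by (subst (asm) sets_vimage_algebra2) auto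
  have AU: "A = (\<Union>v\<in>B \<inter> Vs n. Atv n v)"
  proof (intro set_eqI iffI)
    fix \<omega> assume "\<omega> \<in> A"
    hence "\<omega> \<in> space ?\<Omega>" "gfun n \<omega> \<in> B" using B by auto
    thus "\<omega> \<in> (\<Union>v\<in>B \<inter> Vs n. Atv n v)" using gfun_pre[OF gfun_V, of n \<omega>] gfun_V[of n \<omega>] by blast
  next
    fix \<omega> assume "\<omega> \<in> (\<Union>v\<in>B \<inter> Vs n. Atv n v)"
    then obtain v where "v \<in> B \<inter> Vs n" "\<omega> \<in> Atv n v" by auto
    thus "\<omega> \<in> A" using gfun_pre[of v n] B by auto
  qed
  have cnt: "countable (B \<inter> Vs n)" using Vs_countable by (rule countable_subset[rotated]) auto
  have disj: "disjoint_family_on (Atv n) (B \<inter> Vs n)"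
    unfolding disjoint_family_on_def
  proof (intro ballI impI)
    fix v w assume "v \<in> B \<inter> Vs n" "w \<in> B \<inter> Vs n" "v \<noteq> w"
    thus "Atv n v \<inter> Atv n w = {}" using gfun_pre[of v n] gfun_pre[of w n] by auto
  qed
  have Af: "integrable ?\<Omega> (\<lambda>\<omega>. indicator A \<omega> * ?f \<omega>)"
  proof -
    have "integrable ?\<Omega> ?f" by (rule \<Omega>p.integrable_const_bound[where B=1]) (use fb fm in auto)
    moreover have "A \<in> sets ?\<Omega>" using A BA_sub unfolding subalgebra_def by auto
    ultimately have "integrable ?\<Omega> (\<lambda>\<omega>. ?f \<omega> * indicator A \<omega>)"
      by (intro integrable_real_mult_indicator) auto
    thus ?thesis by (simp add: mult.commute)
  qed
  have "ennreal c0 * emeasure ?\<Omega> A = ennreal c0 * (\<integral>\<^sup>+v. emeasure ?\<Omega> (Atv n v) \<partial>count_space (B \<inter> Vs n))"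
    unfolding AU by (subst emeasure_UN_countable[OF Atv_sets cnt disj]) simp
  also have "\<dots> = (\<integral>\<^sup>+v. ennreal c0 * emeasure ?\<Omega> (Atv n v) \<partial>count_space (B \<inter> Vs n))"
    by (rule nn_integral_cmult[symmetric]) simp
  also have "\<dots> \<le> (\<integral>\<^sup>+v. (\<integral>\<^sup>+\<omega>. ennreal (?f \<omega>) * indicator (Atv n v) \<omega> \<partial>?\<Omega>) \<partial>count_space (B \<inter> Vs n))"
  proof (rule nn_integral_mono)
    fix v
    show "ennreal c0 * emeasure ?\<Omega> (Atv n v) \<le> (\<integral>\<^sup>+\<omega>. ennreal (?f \<omega>) * indicator (Atv n v) \<omega> \<partial>?\<Omega>)"
      unfolding c0_def Atv_def by (rule atom_bound)
  qed
  also have "\<dots> = (\<integral>\<^sup>+v. emeasure (density ?\<Omega> (\<lambda>\<omega>. ennreal (?f \<omega>))) (Atv n v) \<partial>count_space (B \<inter> Vs n))"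
    by (intro nn_integral_cong) (simp add: emeasure_density[OF fme Atv_sets] mult.commute)
  also have "\<dots> = emeasure (density ?\<Omega> (\<lambda>\<omega>. ennreal (?f \<omega>))) A"
    unfolding AU by (rule emeasure_UN_countable[symmetric]) (use Atv_sets cnt disj in auto)
  also have "\<dots> = (\<integral>\<^sup>+\<omega>. ennreal (indicator A \<omega> * ?f \<omega>) \<partial>?\<Omega>)"
    using A BA_sub unfolding subalgebra_def
    by (subst emeasure_density[OF fme]) (auto intro!: nn_integral_cong simp: indicator_def)
  also have "\<dots> = ennreal (\<integral>\<omega>. indicator A \<omega> * ?f \<omega> \<partial>?\<Omega>)"
    by (rule nn_integral_eq_integral[OF Af]) (use fb in auto)
  finally have "ennreal c0 * emeasure ?\<Omega> A \<le> ennreal (\<integral>\<omega>. indicator A \<omega> * ?f \<omega> \<partial>?\<Omega>)" .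
  hence "ennreal (c0 * measure ?\<Omega> A) \<le> ennreal (\<integral>\<omega>. indicator A \<omega> * ?f \<omega> \<partial>?\<Omega>)"
    using c0 by (simp add: \<Omega>p.emeasure_eq_measure ennreal_mult)
  moreover have "0 \<le> (\<integral>\<omega>. indicator A \<omega> * ?f \<omega> \<partial>?\<Omega>)" using fb by (intro Bochner_Integration.integral_nonneg) auto
  ultimately have "c0 * measure ?\<Omega> A \<le> (\<integral>\<omega>. indicator A \<omega> * ?f \<omega> \<partial>?\<Omega>)"
    by (simp add: ennreal_le_iff)
  thus ?thesis unfolding c0_def set_lebesgue_integral_def by simp
qed

end


theorem theorem3:
  fixes MX :: "'x measure" and MY :: "'y measure" and Q :: "('x \<times> 'y) measure"
    and p ph :: "'x \<Rightarrow> real" and s :: "'x \<Rightarrow> 'y \<Rightarrow> real"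
    and \<alpha> \<epsilon> :: real and n :: nat
  assumes "prob_space Q"
    and "sets Q = sets (MX \<Otimes>\<^sub>M MY)"
    and "p \<in> borel_measurable MX"
    and "ph \<in> borel_measurable MX"
    and "(\<lambda>(x, y). s x y) \<in> borel_measurable (MX \<Otimes>\<^sub>M MY)"
    and "\<forall>x\<in>space MX. 0 < p x \<and> p x < 1"
    and "\<forall>x\<in>space MX. 0 < ph x \<and> ph x < 1"
    and "0 < \<alpha>" and "\<alpha> < 1" and "0 < \<epsilon>"
    and "bdd_above ((\<lambda>x. \<bar>ln (odds_ratio p ph x)\<bar>) ` space MX)"
  shows "let \<Omega> = mar_data n Q p;
             \<delta> = exp (2 * (SUP x\<in>space MX. \<bar>ln (odds_ratio p ph x)\<bar>)) - 1
         in AE \<omega> in \<Omega>.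
              real_cond_exp \<Omega> (BA_algebra \<epsilon> ph n \<Omega>) (pro_coverage \<alpha> \<epsilon> ph s n) \<omega>
                \<ge> 1 - \<alpha> - (\<epsilon> + \<delta> + \<epsilon> * \<delta>)"
proof -
  interpret setting MX MY Q p ph s \<alpha> \<epsilon> using assms unfolding setting_def by blast
  let ?\<Omega> = "mar_data n Q p"
  interpret \<Omega>p: prob_space ?\<Omega> unfolding mar_data_def by (intro prob_space_PiM O_prob)
  have int: "integrable ?\<Omega> (pro_coverage \<alpha> \<epsilon> ph s n)"
    by (rule \<Omega>p.integrable_const_bound[where B=1])
       (use cov_meas covF_bounds in \<open>auto simp: cov_eq[OF \<alpha>(2)]\<close>)
  have AE: "AE \<omega> in ?\<Omega>. (1 / Rc) * (1 - \<alpha>) \<le> real_cond_exp ?\<Omega> (BA_algebra \<epsilon> ph n ?\<Omega>) (pro_coverage \<alpha> \<epsilon> ph s n) \<omega>"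
    by (rule cond_exp_lb[OF \<Omega>p.prob_space_axioms BA_sub int F_bound])
  define \<delta> where "\<delta> = exp (2 * (SUP x\<in>space MX. \<bar>ln (odds_ratio p ph x)\<bar>)) - 1"
  have Rc\<delta>: "Rc = (1 + \<epsilon>) * (1 + \<delta>)" unfolding Rc_def \<delta>_def Lsup_def by simp
  have le: "1 - \<alpha> - (\<epsilon> + \<delta> + \<epsilon> * \<delta>) \<le> (1 / Rc) * (1 - \<alpha>)"
  proof -
    have R: "1 \<le> Rc" by (rule Rc_ge1)
    have e: "\<epsilon> + \<delta> + \<epsilon> * \<delta> = Rc - 1" unfolding Rc\<delta> by (simp add: algebra_simps)
    have "(1 - \<alpha>) - (1 / Rc) * (1 - \<alpha>) = (1 - \<alpha>) * (Rc - 1) / Rc" using R by (simp add: field_simps)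
    also have "\<dots> \<le> 1 * (Rc - 1) / 1"
      using R \<alpha> by (intro frac_le mult_mono) auto
    finally show ?thesis unfolding e by simp
  qed
  show ?thesis unfolding Let_def \<delta>_def[symmetric]
    using AE by eventually_elim (use le in auto)
qed


end
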